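(* Let $L$ and $f$ be as in the context and assume (F-1$'$), (F-2$'$), (F-3), (F-4a) and (L-1) hold, and that the function $G$ of (F-4a) satisfies $G(u)<0$ for all $u>0$. Then the stationary equation (1.3) has no solution other than $W\equiv0$. In particular this conclusion holds whenever $f(x,\cdot)$ is concave for each $x$, $F(u)<0$ for all $u>0$, and (F-2$'$), (F-3), (L-1) hold.
   Context: Let $L=\sum_{i,j=1}^n a_{ij}(x)\frac{\partial^2}{\partial x_i\partial x_j}+\sum_{i=1}^n b_i(x)\frac{\partial}{\partial x_i}$ with $a_{ij},b_i\in C^{\alpha}(\mathbb{R}^n)$ and $\sum_{i,j}a_{ij}(x)\nu_i\nu_j>0$ for all $x\in\mathbb{R}^n$, $\nu\in\mathbb{R}^n\setminus\{0\}$. Let $f:\mathbb{R}^n\times[0,\infty)\to\mathbb{R}$ be locally Lipschitz in $x$ and in $u$. The stationary equation (1.3): $LW+f(x,W)=0$ in $\mathbb{R}^n$, $W\ge0$, $W\in C^2(\mathbb{R}^n)$. Let $F(u)=\sup_{x\in\mathbb{R}^n}f(x,u)$ and let $\log^{(i)}$ be the $i$-th iterate of $\log$, with $\prod_{i=1}^0\log^{(i)}u=1$. (F-1$'$): $\sup_{u>0}F(u)<\infty$. (F-2$'$): there exist an integer $m\ge0$ and $\epsilon>0$ with $\lim_{u\to\infty}\frac{F(u)}{u(\prod_{i=1}^m\log^{(i)}u)^2(\log^{(m+1)}u)^{2+\epsilon}}=-\infty$. (F-3): $f(x,0)=0$ for all $x$, and $F$ is locally Lipschitz. (F-4a): the function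 $G(u)=\sup_{x\in\mathbb{R}^n}\sup_{v\ge u}\big(f(x,v)-f(x,v-u)\big)$ is locally Lipschitz, is negative for all sufficiently large $u$, and satisfies $\int^\infty\frac{du}{-G(u)}<\infty$. (L-1): there is $C>0$ with $\sum_{i,j}a_{ij}(x)\nu_i\nu_j\le C|\nu|^2(1+|x|^2)$ for all $x,\nu$ and $|b(x)|\le C(1+|x|)$, where $b=(b_1,\dots,b_n)$. *)

theory Defs
  imports "HOL-Analysis.Analysis"
begin

definition pd1 :: "(real^'n \<Rightarrow> real) \<Rightarrow> 'n \<Rightarrow> real^'n \<Rightarrow> real" where
  "pd1 W i x = frechet_derivative W (at x) (axis i 1)"

definition pd2 :: "(real^'n \<Rightarrow> real) \<Rightarrow> 'n \<Rightarrow> 'n \<Rightarrow> real^'n \<Rightarrow> real" where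
  "pd2 W i j x = frechet_derivative (\<lambda>y. pd1 W j y) (at x) (axis i 1)"

definition C2 :: "(real^'n \<Rightarrow> real) \<Rightarrow> bool" where
  "C2 W \<longleftrightarrow> (\<forall>x. W differentiable (at x)) \<and>
              (\<forall>j x. (pd1 W j) differentiable (at x)) \<and>
              (\<forall>i j. continuous_on UNIV (pd2 W i j))"

definition Lop :: "(real^'n \<Rightarrow> 'n \<Rightarrow> 'n \<Rightarrow> real) \<Rightarrow> (real^'n \<Rightarrow> real^'n)
                    \<Rightarrow> (real^'n \<Rightarrow> real) \<Rightarrow> real^'n \<Rightarrow> real" where
  "Lop a b W x = (\<Sum>i\<in>UNIV. \<Sum>j\<in>UNIV. a x i j * pd2 W i j x) + (\<Sum>i\<in>UNIV. b x $ i * pd1 W i x)"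

definition holder :: "real \<Rightarrow> (real^'n \<Rightarrow> real) \<Rightarrow> bool" where
  "holder \<alpha> g \<longleftrightarrow> (\<forall>K. compact K \<longrightarrow> (\<exists>C. \<forall>x\<in>K. \<forall>y\<in>K. \<bar>g x - g y\<bar> \<le> C * dist x y powr \<alpha>))"

definition loc_lipschitz :: "'a::metric_space set \<Rightarrow> ('a \<Rightarrow> 'b::metric_space) \<Rightarrow> bool" where
  "loc_lipschitz S g \<longleftrightarrow> (\<forall>x\<in>S. \<exists>e>0. \<exists>C. C-lipschitz_on (cball x e \<inter> S) g)"

definition Fsup :: "(real^'n \<Rightarrow> real \<Rightarrow> real) \<Rightarrow> real \<Rightarrow> real" where
  "Fsup f u = (SUP x. f x u)"

definition Gsup :: "(real^'n \<Rightarrow> real \<Rightarrow> real) \<Rightarrow> real \<Rightarrow> real" where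
  "Gsup f u = (SUP p\<in>{(x,v). v \<ge> u}. f (fst p) (snd p) - f (fst p) (snd p - u))"

definition F1' :: "(real^'n \<Rightarrow> real \<Rightarrow> real) \<Rightarrow> bool" where
  "F1' f \<longleftrightarrow> bdd_above (Fsup f ` {0<..})"

definition F2' :: "(real^'n \<Rightarrow> real \<Rightarrow> real) \<Rightarrow> bool" where
  "F2' f \<longleftrightarrow> (\<exists>(m::nat) (\<epsilon>::real). \<epsilon> > 0 \<and>
     filterlim (\<lambda>u. Fsup f u / (u * (\<Prod>i=1..m. (ln ^^ i) u)^2 * ((ln ^^ (m+1)) u) powr (2+\<epsilon>)))
       at_bot at_top)"

definition F3 :: "(real^'n \<Rightarrow> real \<Rightarrow> real) \<Rightarrow> bool" where
  "F3 f \<longleftrightarrow> (\<forall>x. f x 0 = 0) \<and> loc_lipschitz {0..} (Fsup f)"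

definition F4a :: "(real^'n \<Rightarrow> real \<Rightarrow> real) \<Rightarrow> bool" where
  "F4a f \<longleftrightarrow> loc_lipschitz {0..} (Gsup f) \<and>
     (\<exists>u0. (\<forall>u\<ge>u0. Gsup f u < 0) \<and> (\<lambda>u. 1 / (- Gsup f u)) integrable_on {u0..})"

definition L1 :: "(real^'n \<Rightarrow> 'n \<Rightarrow> 'n \<Rightarrow> real) \<Rightarrow> (real^'n \<Rightarrow> real^'n) \<Rightarrow> bool" where
  "L1 a b \<longleftrightarrow> (\<exists>C>0. \<forall>x \<nu>. (\<Sum>i\<in>UNIV. \<Sum>j\<in>UNIV. a x i j * \<nu>$i * \<nu>$j) \<le> C * (norm \<nu>)^2 * (1 + (norm x)^2)
                        \<and> norm (b x) \<le> C * (1 + norm x))"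

definition stat_sol :: "(real^'n \<Rightarrow> 'n \<Rightarrow> 'n \<Rightarrow> real) \<Rightarrow> (real^'n \<Rightarrow> real^'n)
                        \<Rightarrow> (real^'n \<Rightarrow> real \<Rightarrow> real) \<Rightarrow> (real^'n \<Rightarrow> real) \<Rightarrow> bool" where
  "stat_sol a b f W \<longleftrightarrow> C2 W \<and> (\<forall>x. W x \<ge> 0) \<and> (\<forall>x. Lop a b W x + f x (W x) = 0)"

end

theory Submission
  imports Defs
begin

lemma dir_deriv:
  fixes U :: "real^'n \<Rightarrow> real"
  assumes "U differentiable (at (y + t *\<^sub>R v))"
  shows "((\<lambda>s. U (y + s *\<^sub>R v)) has_real_derivative frechet_derivative U (at (y + t *\<^sub>R v)) v) (at t)"
proof -
  have d: "(U has_derivative frechet_derivative U (at (y + t *\<^sub>R v))) (at (y + t *\<^sub>R v))"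
    using assms frechet_derivative_works by blast
  have line: "((\<lambda>s. y + s *\<^sub>R v) has_derivative (\<lambda>s. s *\<^sub>R v)) (at t)"
    by (auto intro!: derivative_eq_intros)
  have lin: "linear (frechet_derivative U (at (y + t *\<^sub>R v)))"
    using assms linear_frechet_derivative by blast
  have eq: "(\<lambda>s. frechet_derivative U (at (y + t *\<^sub>R v)) (s *\<^sub>R v)) = (*) (frechet_derivative U (at (y + t *\<^sub>R v)) v)"
    by (auto simp: fun_eq_iff linear_cmul[OF lin])
  from diff_chain_at[OF line d] show ?thesis
    unfolding has_field_derivative_def o_def eq .
qed

lemma fd_expand:
  fixes U :: "real^'n \<Rightarrow> real"
  assumes "U differentiable (at y)"
  shows "frechet_derivative U (at y) v = (\<Sum>i\<in>UNIV. v$i * pd1 U i y)"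
proof -
  have lin: "linear (frechet_derivative U (at y))"
    using assms linear_frechet_derivative by blast
  have "frechet_derivative U (at y) v = frechet_derivative U (at y) (\<Sum>i\<in>UNIV. v$i *\<^sub>R axis i 1)"
    using basis_expansion[of v] by (simp add: scalar_mult_eq_scaleR)
  also have "\<dots> = (\<Sum>i\<in>UNIV. v$i * frechet_derivative U (at y) (axis i 1))"
    by (simp add: linear_sum[OF lin] linear_cmul[OF lin])
  finally show ?thesis by (simp add: pd1_def)
qed

lemma max_1d:
  fixes h h1 :: "real \<Rightarrow> real"
  assumes d: "d > 0"
    and hd: "\<And>t. \<bar>t\<bar> < d \<Longrightarrow> (h has_real_derivative h1 t) (at t)"
    and h1d: "(h1 has_real_derivative c) (at 0)"
    and mx: "\<And>t. \<bar>t\<bar> < d \<Longrightarrow> h t \<le> h 0"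
  shows "h1 0 = 0 \<and> c \<le> 0"
proof -
  have z: "h1 0 = 0"
    by (rule DERIV_local_max[OF hd[of 0] d]) (use d mx in auto)
  moreover have "c \<le> 0"
  proof (rule ccontr)
    assume "\<not> c \<le> 0"
    then have "c > 0" by simp
    from DERIV_pos_inc_right[OF h1d this] obtain e where e: "e > 0" "\<And>k. k > 0 \<Longrightarrow> k < e \<Longrightarrow> h1 0 < h1 (0 + k)"
      by blast
    define t where "t = min e d / 2"
    have t: "0 < t" "t < e" "t < d" using e d by (auto simp: t_def)
    have "\<And>x. 0 \<le> x \<Longrightarrow> x \<le> t \<Longrightarrow> (h has_real_derivative h1 x) (at x)"
      using t by (intro hd) auto
    from MVT2[OF t(1) this] obtain \<xi> where xi: "0 < \<xi>" "\<xi> < t" "h t - h 0 = (t - 0) * h1 \<xi>"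
      by blast
    have "h1 \<xi> > 0" using e(2)[of \<xi>] xi t z by auto
    then have "t * h1 \<xi> > 0" using t by simp
    then have "h t > h 0" using xi by simp
    with mx[of t] t show False by auto
  qed
  ultimately show ?thesis by blast
qed

lemma sum_insert_zero:
  fixes B M :: "'a \<Rightarrow> 'a \<Rightarrow> real"
  assumes "finite J" "p \<notin> J" "\<And>i. B i p = 0" "\<And>j. B p j = 0"
  shows "(\<Sum>i\<in>insert p J. \<Sum>j\<in>insert p J. B i j * M i j) = (\<Sum>i\<in>J. \<Sum>j\<in>J. B i j * M i j)"
  using assms by (simp add: sum.insert)

lemma trace_psd:
  fixes A M :: "'a \<Rightarrow> 'a \<Rightarrow> real"
  assumes "finite I"
    and "\<forall>i\<in>I. \<forall>j\<in>I. A i j = A j i"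
    and "\<forall>i\<in>I. \<forall>j\<in>I. M i j = M j i"
    and "\<forall>v. (\<Sum>i\<in>I. \<Sum>j\<in>I. A i j * v i * v j) \<ge> 0"
    and "\<forall>v. (\<Sum>i\<in>I. \<Sum>j\<in>I. M i j * v i * v j) \<le> 0"
  shows "(\<Sum>i\<in>I. \<Sum>j\<in>I. A i j * M i j) \<le> 0"
  using assms
proof (induction I arbitrary: A rule: finite_induct)
  case empty
  then show ?case by simp
next
  case (insert p J)
  let ?I = "insert p J"
  have symA: "\<And>i j. i \<in> ?I \<Longrightarrow> j \<in> ?I \<Longrightarrow> A i j = A j i" using insert.prems by blast
  have symM: "\<And>i j. i \<in> ?I \<Longrightarrow> j \<in> ?I \<Longrightarrow> M i j = M j i" using insert.prems by blast
  have symJ: "\<And>i. i \<in> J \<Longrightarrow> A i p = A p i" using symA by blast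
  have psdA: "\<And>v. (\<Sum>i\<in>?I. \<Sum>j\<in>?I. A i j * v i * v j) \<ge> 0" using insert.prems by blast
  have nsdM: "\<And>v. (\<Sum>i\<in>?I. \<Sum>j\<in>?I. M i j * v i * v j) \<le> 0" using insert.prems by blast
  have restr: "(\<Sum>i\<in>?I. \<Sum>j\<in>?I. B i j * (v(p:=0)) i * (v(p:=0)) j) = (\<Sum>i\<in>J. \<Sum>j\<in>J. B i j * v i * v j)"
    for B :: "'a \<Rightarrow> 'a \<Rightarrow> real" and v :: "'a \<Rightarrow> real"
  proof -
    have "\<And>i. i \<in> J \<Longrightarrow> (v(p:=0)) i = v i" using insert.hyps by auto
    then show ?thesis
      using insert.hyps by (simp add: sum.insert)
  qed
  have nsdJ: "\<forall>v. (\<Sum>i\<in>J. \<Sum>j\<in>J. M i j * v i * v j) \<le> 0"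
  proof
    fix v
    show "(\<Sum>i\<in>J. \<Sum>j\<in>J. M i j * v i * v j) \<le> 0"
      using nsdM[of "v(p:=0)"] restr[of M v] by simp
  qed
  have ext: "(\<Sum>i\<in>?I. \<Sum>j\<in>?I. A i j * (v(p:=t)) i * (v(p:=t)) j)
      = (\<Sum>i\<in>J. \<Sum>j\<in>J. A i j * v i * v j) + 2 * t * (\<Sum>j\<in>J. A p j * v j) + t * t * A p p" for v t
  proof -
    have e: "\<And>i. i \<in> J \<Longrightarrow> (v(p:=t)) i = v i" using insert.hyps by auto
    have s1: "(\<Sum>i\<in>J. A i p * v i * t) = t * (\<Sum>j\<in>J. A p j * v j)"
    proof -
      have "(\<Sum>i\<in>J. A i p * v i * t) = (\<Sum>i\<in>J. t * (A p i * v i))"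
        by (intro sum.cong refl) (simp add: symJ)
      then show ?thesis by (simp add: sum_distrib_left)
    qed
    have "(\<Sum>i\<in>?I. \<Sum>j\<in>?I. A i j * (v(p:=t)) i * (v(p:=t)) j)
        = (A p p * t * t + (\<Sum>j\<in>J. A p j * t * v j)) + (\<Sum>i\<in>J. A i p * v i * t + (\<Sum>j\<in>J. A i j * v i * v j))"
      using insert.hyps e by (simp add: sum.insert)
    also have "\<dots> = (\<Sum>i\<in>J. \<Sum>j\<in>J. A i j * v i * v j) + 2 * t * (\<Sum>j\<in>J. A p j * v j) + t * t * A p p"
      using s1 by (simp add: sum.distrib sum_distrib_left algebra_simps)
    finally show ?thesis .
  qed
  have App: "A p p \<ge> 0"
    using ext[of "\<lambda>_. 0" 1] psdA[of "(\<lambda>_. 0)(p:=1)"] by simp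
  show ?case
  proof (cases "A p p = 0")
    case True
    have row0: "A p j = 0" if j: "j \<in> J" for j
    proof (rule ccontr)
      assume ne: "A p j \<noteq> 0"
      define v where "v = (\<lambda>_. 0::real)(j := 1)"
      have sv: "(\<Sum>j\<in>J. A p j * v j) = A p j" using j insert.hyps(1) by (simp add: v_def sum.remove[of J j])
      have qv: "(\<Sum>i\<in>J. \<Sum>j\<in>J. A i j * v i * v j) = A j j"
        using j insert.hyps(1) by (simp add: v_def sum.remove[of J j] if_distrib cong: if_cong)
      define t where "t = - (A j j + 1) / (2 * A p j)"
      have "0 \<le> A j j + 2 * t * A p j"
        using psdA[of "v(p:=t)"] ext[of v t] sv qv True by simp
      also have "2 * t * A p j = - (A j j + 1)" using ne by (simp add: t_def field_simps)
      finally show False by simp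
    qed
    define B where "B i j = (if i = p \<or> j = p then 0 else A i j)" for i j
    have "(\<Sum>i\<in>?I. \<Sum>j\<in>?I. A i j * M i j) = (\<Sum>i\<in>?I. \<Sum>j\<in>?I. B i j * M i j)"
      using row0 symJ True insert.hyps by (intro sum.cong refl) (auto simp: B_def)
    also have "\<dots> = (\<Sum>i\<in>J. \<Sum>j\<in>J. B i j * M i j)"
      by (rule sum_insert_zero) (use insert.hyps in \<open>auto simp: B_def\<close>)
    also have "\<dots> \<le> 0"
    proof (rule insert.IH)
      show "\<forall>i\<in>J. \<forall>j\<in>J. B i j = B j i" unfolding B_def using symA symJ by (metis insertI2 mult.commute)
      show "\<forall>i\<in>J. \<forall>j\<in>J. M i j = M j i" using symM by auto
      show "\<forall>v. 0 \<le> (\<Sum>i\<in>J. \<Sum>j\<in>J. B i j * v i * v j)"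
      proof
        fix v
        have "(\<Sum>i\<in>J. \<Sum>j\<in>J. B i j * v i * v j) = (\<Sum>i\<in>J. \<Sum>j\<in>J. A i j * v i * v j)"
          using insert.hyps by (auto simp: B_def intro!: sum.cong)
        also have "\<dots> \<ge> 0" using psdA[of "v(p:=0)"] ext[of v 0] by simp
        finally show "0 \<le> (\<Sum>i\<in>J. \<Sum>j\<in>J. B i j * v i * v j)" by simp
      qed
      show "\<forall>v. (\<Sum>i\<in>J. \<Sum>j\<in>J. M i j * v i * v j) \<le> 0" by (rule nsdJ)
    qed
    finally show ?thesis .
  next
    case False
    with App have pos: "A p p > 0" by simp
    define B where "B i j = A i j - A i p * A p j / A p p" for i j
    have Bp1: "B i p = 0" if "i \<in> ?I" for i
    proof -
      have "A i p = A p i" using symA[OF that, of p] by simp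
      then show ?thesis using pos by (simp add: B_def)
    qed
    have Bp2: "B p j = 0" for j using pos by (simp add: B_def)
    define w where "w i = A p i" for i
    have split: "(\<Sum>i\<in>?I. \<Sum>j\<in>?I. A i j * M i j) = (\<Sum>i\<in>?I. \<Sum>j\<in>?I. B i j * M i j)
          + (1 / A p p) * (\<Sum>i\<in>?I. \<Sum>j\<in>?I. M i j * w i * w j)"
    proof -
      have "(\<Sum>i\<in>?I. \<Sum>j\<in>?I. A i j * M i j) = (\<Sum>i\<in>?I. \<Sum>j\<in>?I. B i j * M i j + (1 / A p p) * (M i j * w i * w j))"
      proof (intro sum.cong refl)
        fix i j assume ij: "i \<in> ?I" "j \<in> ?I"
        have "A i p = A p i" using symA[OF ij(1), of p] by simp
        then show "A i j * M i j = B i j * M i j + (1 / A p p) * (M i j * w i * w j)"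
          using pos by (simp add: B_def w_def field_simps)
      qed
      also have "\<dots> = (\<Sum>i\<in>?I. \<Sum>j\<in>?I. B i j * M i j) + (1 / A p p) * (\<Sum>i\<in>?I. \<Sum>j\<in>?I. M i j * w i * w j)"
        by (simp add: sum.distrib sum_distrib_left)
      finally show ?thesis .
    qed
    have "(\<Sum>i\<in>?I. \<Sum>j\<in>?I. B i j * M i j) = (\<Sum>i\<in>?I. \<Sum>j\<in>?I. (if i = p \<or> j = p then 0 else B i j) * M i j)"
      using Bp1 Bp2 by (intro sum.cong refl) auto
    also have "\<dots> = (\<Sum>i\<in>J. \<Sum>j\<in>J. (if i = p \<or> j = p then 0 else B i j) * M i j)"
      by (rule sum_insert_zero) (use insert.hyps Bp1 Bp2 in auto)
    also have "\<dots> = (\<Sum>i\<in>J. \<Sum>j\<in>J. B i j * M i j)"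
      using insert.hyps by (intro sum.cong refl) auto
    also have "\<dots> \<le> 0"
    proof (rule insert.IH)
      show "\<forall>i\<in>J. \<forall>j\<in>J. B i j = B j i" unfolding B_def using symA symJ by (metis insertI2 mult.commute)
      show "\<forall>i\<in>J. \<forall>j\<in>J. M i j = M j i" using symM by auto
      show "\<forall>v. 0 \<le> (\<Sum>i\<in>J. \<Sum>j\<in>J. B i j * v i * v j)"
      proof
        fix v
        define s where "s = (\<Sum>j\<in>J. A p j * v j)"
        have "(\<Sum>i\<in>J. \<Sum>j\<in>J. B i j * v i * v j) = (\<Sum>i\<in>J. \<Sum>j\<in>J. A i j * v i * v j) - s * s / A p p"
        proof -
          have "(\<Sum>i\<in>J. \<Sum>j\<in>J. B i j * v i * v j) = (\<Sum>i\<in>J. \<Sum>j\<in>J. A i j * v i * v j - (A p i * v i) * (A p j * v j) / A p p)"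
          proof (intro sum.cong refl)
            fix i j assume ij: "i \<in> J" "j \<in> J"
            have "A i p = A p i" using symJ[OF ij(1)] by simp
            then show "B i j * v i * v j = A i j * v i * v j - (A p i * v i) * (A p j * v j) / A p p"
              using pos by (simp add: B_def field_simps)
          qed
          also have "\<dots> = (\<Sum>i\<in>J. \<Sum>j\<in>J. A i j * v i * v j) - (\<Sum>i\<in>J. \<Sum>j\<in>J. (A p i * v i) * (A p j * v j)) / A p p"
            by (simp add: sum_subtractf sum_divide_distrib)
          also have "(\<Sum>i\<in>J. \<Sum>j\<in>J. (A p i * v i) * (A p j * v j)) = s * s"
            by (simp add: s_def sum_product)
          finally show ?thesis .
        qed
        also have "\<dots> \<ge> 0"
        proof -
          have "0 \<le> (\<Sum>i\<in>J. \<Sum>j\<in>J. A i j * v i * v j) + 2 * (- s / A p p) * s + (- s / A p p) * (- s / A p p) * A p p"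
            using psdA[of "v(p := - s / A p p)"] ext[of v "- s / A p p"] by (simp add: s_def)
          also have "\<dots> = (\<Sum>i\<in>J. \<Sum>j\<in>J. A i j * v i * v j) - s * s / A p p"
            using pos by (simp add: field_simps power2_eq_square)
          finally show ?thesis by simp
        qed
        finally show "0 \<le> (\<Sum>i\<in>J. \<Sum>j\<in>J. B i j * v i * v j)" .
      qed
      show "\<forall>v. (\<Sum>i\<in>J. \<Sum>j\<in>J. M i j * v i * v j) \<le> 0" by (rule nsdJ)
    qed
    finally have "(\<Sum>i\<in>?I. \<Sum>j\<in>?I. B i j * M i j) \<le> 0" .
    moreover have "(1 / A p p) * (\<Sum>i\<in>?I. \<Sum>j\<in>?I. M i j * w i * w j) \<le> 0"
      using nsdM[of w] pos by (simp add: divide_nonpos_pos)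
    ultimately show ?thesis using split by linarith
  qed
qed

lemma delta_mvt:
  fixes W :: "real^'n \<Rightarrow> real"
  assumes dW: "\<And>y. W differentiable (at y)" and dP: "\<And>j y. pd1 W j differentiable (at y)" and h: "h > 0"
  shows "\<exists>\<xi>. dist \<xi> x \<le> 2*h \<and> W (x + h *\<^sub>R axis i 1 + h *\<^sub>R axis j 1) - W (x + h *\<^sub>R axis i 1) - W (x + h *\<^sub>R axis j 1) + W x = h*h * pd2 W i j \<xi>"
proof -
  define ei :: "real^'n" where "ei = axis i 1"
  define ej :: "real^'n" where "ej = axis j 1"
  define \<phi> where "\<phi> s = W (x + h *\<^sub>R ei + s *\<^sub>R ej) - W (x + s *\<^sub>R ej)" for s
  have "(\<phi> has_real_derivative (pd1 W j (x + h *\<^sub>R ei + s *\<^sub>R ej) - pd1 W j (x + s *\<^sub>R ej))) (at s)" for s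
    unfolding \<phi>_def pd1_def ej_def
    by (intro derivative_intros dir_deriv dW)
  then obtain s1 where s1: "0 < s1" "s1 < h" "\<phi> h - \<phi> 0 = (h - 0) * (pd1 W j (x + h *\<^sub>R ei + s1 *\<^sub>R ej) - pd1 W j (x + s1 *\<^sub>R ej))"
    using MVT2[OF h, of \<phi> "\<lambda>s. pd1 W j (x + h *\<^sub>R ei + s *\<^sub>R ej) - pd1 W j (x + s *\<^sub>R ej)"] by blast
  define \<rho> where "\<rho> r = pd1 W j (x + s1 *\<^sub>R ej + r *\<^sub>R ei)" for r
  have "(\<rho> has_real_derivative pd2 W i j (x + s1 *\<^sub>R ej + r *\<^sub>R ei)) (at r)" for r
    unfolding \<rho>_def pd2_def ei_def
    by (intro dir_deriv dP)
  then obtain r1 where r1: "0 < r1" "r1 < h" "\<rho> h - \<rho> 0 = (h - 0) * pd2 W i j (x + s1 *\<^sub>R ej + r1 *\<^sub>R ei)"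
    using MVT2[OF h, of \<rho> "\<lambda>r. pd2 W i j (x + s1 *\<^sub>R ej + r *\<^sub>R ei)"] by blast
  define \<xi> where "\<xi> = x + s1 *\<^sub>R ej + r1 *\<^sub>R ei"
  have "dist \<xi> x = norm (s1 *\<^sub>R ej + r1 *\<^sub>R ei)" by (simp add: \<xi>_def dist_norm)
  also have "\<dots> \<le> norm (s1 *\<^sub>R ej) + norm (r1 *\<^sub>R ei)" by (rule norm_triangle_ineq)
  also have "\<dots> = s1 + r1" using s1 r1 by (simp add: ei_def ej_def)
  finally have d: "dist \<xi> x \<le> 2*h" using s1 r1 by simp
  have "\<rho> h = pd1 W j (x + h *\<^sub>R ei + s1 *\<^sub>R ej)" "\<rho> 0 = pd1 W j (x + s1 *\<^sub>R ej)"
    by (simp_all add: \<rho>_def add_ac)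
  then have "W (x + h *\<^sub>R ei + h *\<^sub>R ej) - W (x + h *\<^sub>R ei) - W (x + h *\<^sub>R ej) + W x = h*h * pd2 W i j \<xi>"
    using s1(3) r1(3) by (simp add: \<phi>_def \<xi>_def algebra_simps)
  then show ?thesis using d unfolding ei_def ej_def by blast
qed

lemma abs_contra: "\<bar>A - a\<bar> < \<bar>a - b\<bar> / 2 \<Longrightarrow> \<bar>A - b\<bar> < \<bar>a - b\<bar> / 2 \<Longrightarrow> False" for A a b :: real
  by (simp add: abs_if split: if_split_asm)

lemma schwarz:
  fixes W :: "real^'n \<Rightarrow> real"
  assumes "C2 W"
  shows "pd2 W i j x = pd2 W j i x"
proof (rule ccontr)
  assume ne: "pd2 W i j x \<noteq> pd2 W j i x"
  define e where "e = \<bar>pd2 W i j x - pd2 W j i x\<bar> / 2"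
  have e: "e > 0" using ne by (simp add: e_def)
  have dW: "\<And>y. W differentiable (at y)" and dP: "\<And>j y. pd1 W j differentiable (at y)"
    and cP: "\<And>i j. continuous_on UNIV (pd2 W i j)"
    using assms unfolding C2_def by blast+
  obtain d1 where d1: "d1 > 0" "\<And>y. dist y x < d1 \<Longrightarrow> dist (pd2 W i j y) (pd2 W i j x) < e"
    using cP[of i j] e unfolding continuous_on_iff by (meson UNIV_I)
  obtain d2 where d2: "d2 > 0" "\<And>y. dist y x < d2 \<Longrightarrow> dist (pd2 W j i y) (pd2 W j i x) < e"
    using cP[of j i] e unfolding continuous_on_iff by (meson UNIV_I)
  define h where "h = min d1 d2 / 4"
  have h: "h > 0" "2*h < d1" "2*h < d2" using d1 d2 by (auto simp: h_def)
  obtain \<xi> where \<xi>: "dist \<xi> x \<le> 2*h" "W (x + h *\<^sub>R axis i 1 + h *\<^sub>R axis j 1) - W (x + h *\<^sub>R axis i 1) - W (x + h *\<^sub>R axis j 1) + W x = h*h * pd2 W i j \<xi>"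
    using delta_mvt[OF dW dP h(1), of x i j] by blast
  obtain \<xi>' where \<xi>': "dist \<xi>' x \<le> 2*h" "W (x + h *\<^sub>R axis j 1 + h *\<^sub>R axis i 1) - W (x + h *\<^sub>R axis j 1) - W (x + h *\<^sub>R axis i 1) + W x = h*h * pd2 W j i \<xi>'"
    using delta_mvt[OF dW dP h(1), of x j i] by blast
  have sw: "x + h *\<^sub>R axis j 1 + h *\<^sub>R axis i 1 = x + h *\<^sub>R axis i 1 + h *\<^sub>R axis j 1"
    by (simp add: add_ac)
  have "h*h * pd2 W i j \<xi> = h*h * pd2 W j i \<xi>'"
    using \<xi>(2) \<xi>'(2) unfolding sw by linarith
  then have eq: "pd2 W i j \<xi> = pd2 W j i \<xi>'" using h by simp
  have "dist (pd2 W i j \<xi>) (pd2 W i j x) < e" using d1(2) \<xi>(1) h by simp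
  moreover have "dist (pd2 W j i \<xi>') (pd2 W j i x) < e" using d2(2) \<xi>'(1) h by simp
  ultimately show False using eq unfolding dist_real_def e_def
    using abs_contra[of "pd2 W i j \<xi>" "pd2 W i j x" "pd2 W j i x"] by simp
qed

lemma pd2_pd1: "pd2 W i j x = pd1 (pd1 W j) i x"
  unfolding pd2_def by (rule pd1_def[symmetric])

lemma line_deriv:
  fixes U :: "real^'n \<Rightarrow> real"
  assumes "\<And>y. U differentiable (at y)"
  shows "((\<lambda>s. U (z + s *\<^sub>R v)) has_real_derivative (\<Sum>i\<in>UNIV. v$i * pd1 U i (z + t *\<^sub>R v))) (at t)"
  using dir_deriv[of U z t v] fd_expand[of U "z + t *\<^sub>R v" v] assms by simp

lemma sum_axis: "(\<Sum>k\<in>UNIV. (axis j (1::real))$k * c k) = c j"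
proof -
  have "(\<Sum>k\<in>UNIV. (axis j (1::real))$k * c k) = (\<Sum>k\<in>UNIV. if k = j then c k else 0)"
    by (intro sum.cong refl) (simp add: axis_def)
  then show ?thesis by simp
qed

lemma quad_sym:
  fixes A M :: "'n::finite \<Rightarrow> 'n \<Rightarrow> real"
  assumes "\<And>i j. M i j = M j i"
  shows "(\<Sum>i\<in>UNIV. \<Sum>j\<in>UNIV. A j i * M i j) = (\<Sum>i\<in>UNIV. \<Sum>j\<in>UNIV. A i j * M i j)"
proof -
  have "(\<Sum>i\<in>UNIV. \<Sum>j\<in>UNIV. A j i * M i j) = (\<Sum>j\<in>UNIV. \<Sum>i\<in>UNIV. A j i * M i j)"
    by (rule sum.swap)
  also have "\<dots> = (\<Sum>j\<in>UNIV. \<Sum>i\<in>UNIV. A j i * M j i)" using assms by simp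
  finally show ?thesis .
qed

lemma sym_avg:
  fixes A M :: "'n::finite \<Rightarrow> 'n \<Rightarrow> real"
  assumes symM: "\<And>i j. M i j = M j i"
  shows "(\<Sum>i\<in>UNIV. \<Sum>j\<in>UNIV. (A i j + A j i) / 2 * M i j) = (\<Sum>i\<in>UNIV. \<Sum>j\<in>UNIV. A i j * M i j)"
proof -
  have "(\<Sum>i\<in>UNIV. \<Sum>j\<in>UNIV. (A i j + A j i) / 2 * M i j) = (\<Sum>i\<in>UNIV. \<Sum>j\<in>UNIV. A i j * M i j / 2 + A j i * M i j / 2)"
    by (intro sum.cong refl) (simp add: field_simps)
  also have "\<dots> = (\<Sum>i\<in>UNIV. \<Sum>j\<in>UNIV. A i j * M i j) / 2 + (\<Sum>i\<in>UNIV. \<Sum>j\<in>UNIV. A j i * M i j) / 2"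
    by (simp add: sum.distrib sum_divide_distrib)
  finally show ?thesis using quad_sym[of M A, OF symM] by simp
qed

lemma core:
  fixes W \<psi> :: "real^'n \<Rightarrow> real" and Q Q1 Q2 :: "real \<Rightarrow> real" and A :: "'n \<Rightarrow> 'n \<Rightarrow> real"
  assumes W: "C2 W"
    and d\<psi>: "\<And>y. \<psi> differentiable (at y)" "\<And>j y. pd1 \<psi> j differentiable (at y)"
    and sym\<psi>: "\<And>i j. pd2 \<psi> i j z = pd2 \<psi> j i z"
    and Q1: "\<And>w. w > T \<Longrightarrow> (Q has_real_derivative Q1 w) (at w)"
    and Q2: "\<And>w. w > T \<Longrightarrow> (Q1 has_real_derivative Q2 w) (at w)"
    and Wz: "W z > T"
    and mx: "\<And>x. Q (W x) - \<psi> x \<le> Q (W z) - \<psi> z"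
    and psd: "\<And>v. (\<Sum>i\<in>UNIV. \<Sum>j\<in>UNIV. A i j * v$i * v$j) \<ge> 0"
  shows "(\<forall>j. Q1 (W z) * pd1 W j z = pd1 \<psi> j z) \<and>
    (\<Sum>i\<in>UNIV. \<Sum>j\<in>UNIV. A i j * (Q2 (W z) * pd1 W i z * pd1 W j z + Q1 (W z) * pd2 W i j z - pd2 \<psi> i j z)) \<le> 0"
proof -
  have dW: "\<And>y. W differentiable (at y)" and dP: "\<And>j y. pd1 W j differentiable (at y)"
    using W unfolding C2_def by blast+
  define q1 where "q1 = Q1 (W z)"
  define q2 where "q2 = Q2 (W z)"
  define M where "M i j = q2 * pd1 W i z * pd1 W j z + q1 * pd2 W i j z - pd2 \<psi> i j z" for i j
  have key: "q1 * (\<Sum>j\<in>UNIV. v$j * pd1 W j z) = (\<Sum>j\<in>UNIV. v$j * pd1 \<psi> j z)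
      \<and> q2 * (\<Sum>j\<in>UNIV. v$j * pd1 W j z) * (\<Sum>j\<in>UNIV. v$j * pd1 W j z)
        + q1 * (\<Sum>j\<in>UNIV. v$j * (\<Sum>i\<in>UNIV. v$i * pd2 W i j z))
        - (\<Sum>j\<in>UNIV. v$j * (\<Sum>i\<in>UNIV. v$i * pd2 \<psi> i j z)) \<le> 0" for v
  proof -
    define w where "w t = W (z + t *\<^sub>R v)" for t
    define w1 where "w1 t = (\<Sum>j\<in>UNIV. v$j * pd1 W j (z + t *\<^sub>R v))" for t
    define p1 where "p1 t = (\<Sum>j\<in>UNIV. v$j * pd1 \<psi> j (z + t *\<^sub>R v))" for t
    define w2 where "w2 = (\<Sum>j\<in>UNIV. v$j * (\<Sum>i\<in>UNIV. v$i * pd2 W i j z))"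
    define p2 where "p2 = (\<Sum>j\<in>UNIV. v$j * (\<Sum>i\<in>UNIV. v$i * pd2 \<psi> i j z))"
    have wd: "(w has_real_derivative w1 t) (at t)" for t
      unfolding w_def w1_def by (rule line_deriv[OF dW])
    have pd: "((\<lambda>t. \<psi> (z + t *\<^sub>R v)) has_real_derivative p1 t) (at t)" for t
      unfolding p1_def by (rule line_deriv[OF d\<psi>(1)])
    have w1d: "(w1 has_real_derivative w2) (at 0)"
    proof -
      have "((\<lambda>t. v$j * pd1 W j (z + t *\<^sub>R v)) has_real_derivative v$j * (\<Sum>i\<in>UNIV. v$i * pd2 W i j z)) (at 0)" for j
        using line_deriv[of "pd1 W j" z v 0, OF dP] by (auto intro!: derivative_eq_intros simp: pd2_pd1)
      then show ?thesis unfolding w1_def w2_def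
        by (intro DERIV_sum) auto
    qed
    have p1d: "(p1 has_real_derivative p2) (at 0)"
    proof -
      have "((\<lambda>t. v$j * pd1 \<psi> j (z + t *\<^sub>R v)) has_real_derivative v$j * (\<Sum>i\<in>UNIV. v$i * pd2 \<psi> i j z)) (at 0)" for j
        using line_deriv[of "pd1 \<psi> j" z v 0, OF d\<psi>(2)] by (auto intro!: derivative_eq_intros simp: pd2_pd1)
      then show ?thesis unfolding p1_def p2_def
        by (intro DERIV_sum) auto
    qed
    have w0: "w 0 = W z" by (simp add: w_def)
    have "isCont w 0" using wd DERIV_isCont by blast
    then have "w \<midarrow>0\<rightarrow> w 0" by (simp add: isCont_def)
    from LIM_D[OF this, of "W z - T"] Wz obtain d where d: "d > 0"
      "\<And>t. t \<noteq> 0 \<and> norm (t - 0) < d \<longrightarrow> norm (w t - w 0) < W z - T" by auto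
    have wT: "w t > T" if "\<bar>t\<bar> < d" for t
    proof (cases "t = 0")
      case True then show ?thesis using w0 Wz by simp
    next
      case False then show ?thesis using d(2)[of t] that w0 by auto
    qed
    define h where "h t = Q (w t) - \<psi> (z + t *\<^sub>R v)" for t
    define h1 where "h1 t = Q1 (w t) * w1 t - p1 t" for t
    have hd: "(h has_real_derivative h1 t) (at t)" if "\<bar>t\<bar> < d" for t
    proof -
      have "((\<lambda>t. Q (w t)) has_real_derivative Q1 (w t) * w1 t) (at t)"
        by (rule DERIV_chain2[OF Q1[OF wT[OF that]] wd])
      then show ?thesis unfolding h_def h1_def
        by (intro derivative_intros pd)
    qed
    have h1d: "(h1 has_real_derivative (q2 * w1 0 * w1 0 + q1 * w2 - p2)) (at 0)"
    proof -
      have "((\<lambda>t. Q1 (w t)) has_real_derivative q2 * w1 0) (at 0)"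
        using DERIV_chain2[OF Q2[OF wT[of 0]] wd[of 0]] d w0 by (simp add: q2_def)
      from DERIV_mult[OF this w1d] have "((\<lambda>t. Q1 (w t) * w1 t) has_real_derivative q2 * w1 0 * w1 0 + q1 * w2) (at 0)"
        using w0 by (simp add: q1_def mult.commute)
      then show ?thesis unfolding h1_def by (intro derivative_intros p1d)
    qed
    have mxh: "h t \<le> h 0" for t
      using mx[of "z + t *\<^sub>R v"] by (simp add: h_def w_def)
    from max_1d[OF d(1) hd h1d mxh] have r: "h1 0 = 0" "q2 * w1 0 * w1 0 + q1 * w2 - p2 \<le> 0" by auto
    have "w1 0 = (\<Sum>j\<in>UNIV. v$j * pd1 W j z)" "p1 0 = (\<Sum>j\<in>UNIV. v$j * pd1 \<psi> j z)"
      by (simp_all add: w1_def p1_def)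
    then show ?thesis using r w0 unfolding h1_def w2_def p2_def q1_def by auto
  qed
  have grad: "\<forall>j. q1 * pd1 W j z = pd1 \<psi> j z"
  proof
    fix j
    show "q1 * pd1 W j z = pd1 \<psi> j z"
      using conjunct1[OF key[of "axis j 1"]] by (simp add: sum_axis)
  qed
  have quad: "(\<Sum>i\<in>UNIV. \<Sum>j\<in>UNIV. M i j * u i * u j) \<le> 0" for u
  proof -
    define v :: "real^'n" where "v = (\<chi> i. u i)"
    have vu: "v$i = u i" for i by (simp add: v_def)
    have e1: "(\<Sum>j\<in>UNIV. v$j * pd1 W j z) * (\<Sum>j\<in>UNIV. v$j * pd1 W j z)
        = (\<Sum>i\<in>UNIV. \<Sum>j\<in>UNIV. pd1 W i z * pd1 W j z * u i * u j)"
      by (simp add: sum_product vu mult_ac)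
    have e2: "(\<Sum>j\<in>UNIV. v$j * (\<Sum>i\<in>UNIV. v$i * H i j)) = (\<Sum>i\<in>UNIV. \<Sum>j\<in>UNIV. H i j * u i * u j)"
      for H :: "'n \<Rightarrow> 'n \<Rightarrow> real"
    proof -
      have "(\<Sum>j\<in>UNIV. v$j * (\<Sum>i\<in>UNIV. v$i * H i j)) = (\<Sum>j\<in>UNIV. \<Sum>i\<in>UNIV. H i j * u i * u j)"
        by (simp add: sum_distrib_left vu mult_ac)
      also have "\<dots> = (\<Sum>i\<in>UNIV. \<Sum>j\<in>UNIV. H i j * u i * u j)" by (rule sum.swap)
      finally show ?thesis .
    qed
    have "(\<Sum>i\<in>UNIV. \<Sum>j\<in>UNIV. M i j * u i * u j)
        = q2 * (\<Sum>i\<in>UNIV. \<Sum>j\<in>UNIV. pd1 W i z * pd1 W j z * u i * u j)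
          + q1 * (\<Sum>i\<in>UNIV. \<Sum>j\<in>UNIV. pd2 W i j z * u i * u j)
          - (\<Sum>i\<in>UNIV. \<Sum>j\<in>UNIV. pd2 \<psi> i j z * u i * u j)"
      by (simp add: M_def sum_distrib_left sum.distrib sum_subtractf algebra_simps)
    also have "\<dots> \<le> 0"
      using conjunct2[OF key[of v]] e1 e2[of "\<lambda>i j. pd2 W i j z"] e2[of "\<lambda>i j. pd2 \<psi> i j z"]
      by (simp add: mult.assoc)
    finally show ?thesis .
  qed
  have symM: "M i j = M j i" for i j
    using schwarz[OF W, of i j z] sym\<psi>[of i j] by (simp add: M_def mult_ac)
  define S where "S i j = (A i j + A j i) / 2" for i j
  have SA: "(\<Sum>i\<in>UNIV. \<Sum>j\<in>UNIV. S i j * M i j) = (\<Sum>i\<in>UNIV. \<Sum>j\<in>UNIV. A i j * M i j)"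
    unfolding S_def by (rule sym_avg[OF symM])
  have psdS: "\<forall>u. (\<Sum>i\<in>UNIV. \<Sum>j\<in>UNIV. S i j * u i * u j) \<ge> 0"
  proof
    fix u :: "'n \<Rightarrow> real"
    define v :: "real^'n" where "v = (\<chi> i. u i)"
    have "(\<Sum>i\<in>UNIV. \<Sum>j\<in>UNIV. S i j * u i * u j) = (\<Sum>i\<in>UNIV. \<Sum>j\<in>UNIV. S i j * (u i * u j))"
      by (simp add: mult.assoc)
    also have "\<dots> = (\<Sum>i\<in>UNIV. \<Sum>j\<in>UNIV. A i j * (u i * u j))"
      unfolding S_def by (rule sym_avg) simp
    also have "\<dots> = (\<Sum>i\<in>UNIV. \<Sum>j\<in>UNIV. A i j * v$i * v$j)"
      by (simp add: v_def mult.assoc)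
    finally show "(\<Sum>i\<in>UNIV. \<Sum>j\<in>UNIV. S i j * u i * u j) \<ge> 0" using psd[of v] by simp
  qed
  have "(\<Sum>i\<in>UNIV. \<Sum>j\<in>UNIV. S i j * M i j) \<le> 0"
    by (rule trace_psd) (use symM psdS quad in \<open>auto simp: S_def\<close>)
  then show ?thesis using grad SA by (simp add: M_def q1_def q2_def)
qed

definition psi :: "real \<Rightarrow> real^'n \<Rightarrow> real" where
  "psi \<eta> x = \<eta> * ln (1 + x \<bullet> x)"

lemma rho_pos: "1 + (x::real^'n) \<bullet> x > 0"
  by (simp add: add_pos_nonneg)

lemma psi_deriv: "(psi \<eta> has_derivative (\<lambda>h. \<eta> * (2 * (x \<bullet> h) / (1 + x \<bullet> x)))) (at x)"
  unfolding psi_def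
  using rho_pos[of x]
  by (auto intro!: derivative_eq_intros simp: inner_commute field_simps)

lemma pd1_psi: "pd1 (psi \<eta>) j x = 2 * \<eta> * x$j / (1 + x \<bullet> x)"
  unfolding pd1_def frechet_derivative_at[OF psi_deriv, symmetric]
  by (simp add: inner_axis)

lemma pd1_psi_fun: "pd1 (psi \<eta>) j = (\<lambda>y. 2 * \<eta> * y$j / (1 + y \<bullet> y))"
  by (simp add: fun_eq_iff pd1_psi)

lemma pd1_psi_deriv:
  "((\<lambda>y::real^'n. 2 * \<eta> * y$j / (1 + y \<bullet> y)) has_derivative
     (\<lambda>h. 2 * \<eta> * (h$j * (1 + y \<bullet> y) - y$j * (2 * (y \<bullet> h))) / (1 + y \<bullet> y)^2)) (at y)"
proof -
  have c: "((\<lambda>y::real^'n. y$j) has_derivative (\<lambda>h. h$j)) (at y)"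
    by (rule bounded_linear_imp_has_derivative) (rule bounded_linear_vec_nth)
  show ?thesis
    using rho_pos[of y]
    by (auto intro!: derivative_eq_intros c simp: inner_commute field_simps power2_eq_square)
qed

lemma pd2_psi: fixes y :: "real^'n" shows "pd2 (psi \<eta>) i j y = 2 * \<eta> * ((if i = j then 1 else 0) * (1 + y \<bullet> y) - 2 * y$j * y$i) / (1 + y \<bullet> y)^2"
proof -
  have a: "(axis i 1 :: real^'n)$j = (if i = j then 1 else 0)" by (simp add: axis_def)
  have b: "y \<bullet> axis i 1 = y$i" by (simp add: inner_axis)
  show ?thesis
    unfolding pd2_def pd1_psi_fun frechet_derivative_at[OF pd1_psi_deriv, symmetric] a b by simp
qed

lemma psi_differentiable: "psi \<eta> differentiable (at x)"
  using psi_deriv differentiable_def by blast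

lemma pd1_psi_differentiable: "pd1 (psi \<eta>) j differentiable (at x)"
  unfolding pd1_psi_fun using pd1_psi_deriv differentiable_def by blast

lemma pd2_psi_sym: "pd2 (psi \<eta>) i j y = pd2 (psi \<eta>) j i y"
  by (simp add: pd2_psi mult_ac)

lemma diag_bound:
  fixes a :: "real^'n \<Rightarrow> 'n \<Rightarrow> 'n \<Rightarrow> real"
  assumes "\<And>\<nu>. (\<Sum>i\<in>UNIV. \<Sum>j\<in>UNIV. a z i j * \<nu>$i * \<nu>$j) \<le> C * (norm \<nu>)^2 * (1 + (norm z)^2)"
  shows "a z k k \<le> C * (1 + z \<bullet> z)"
proof -
  have "(\<Sum>i\<in>UNIV. \<Sum>j\<in>UNIV. a z i j * (axis k 1 :: real^'n)$i * (axis k 1 :: real^'n)$j) = a z k k"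
  proof -
    have "(\<Sum>i\<in>UNIV. \<Sum>j\<in>UNIV. a z i j * (axis k 1 :: real^'n)$i * (axis k 1 :: real^'n)$j)
        = (\<Sum>i\<in>UNIV. (axis k 1 :: real^'n)$i * (\<Sum>j\<in>UNIV. (axis k 1 :: real^'n)$j * a z i j))"
      by (simp add: sum_distrib_left mult_ac)
    also have "\<dots> = a z k k" by (simp add: sum_axis)
    finally show ?thesis .
  qed
  then show ?thesis using assms[of "axis k 1"] by (simp add: power2_norm_eq_inner)
qed

lemma aux_quad: "(1 + t) * t \<le> 2 * (1 + t^2)" for t :: real
proof -
  have e: "2 * (1 + t^2) - (1 + t) * t = (t - 1/2)^2 + 7/4" by (simp add: power2_eq_square algebra_simps)
  have "0 \<le> (t - 1/2)^2" by simp
  then show ?thesis using e by linarith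
qed

lemma sum2_lin:
  fixes X Y :: "'a \<Rightarrow> 'b \<Rightarrow> real"
  shows "(\<Sum>i\<in>I. \<Sum>j\<in>J. k * (X i j * r - 2 * Y i j)) = k * ((\<Sum>i\<in>I. \<Sum>j\<in>J. X i j) * r - 2 * (\<Sum>i\<in>I. \<Sum>j\<in>J. Y i j))"
proof -
  have "(\<Sum>i\<in>I. \<Sum>j\<in>J. k * (X i j * r - 2 * Y i j)) = (\<Sum>i\<in>I. \<Sum>j\<in>J. (k * r) * X i j - (2 * k) * Y i j)"
    by (simp add: algebra_simps)
  also have "\<dots> = (k * r) * (\<Sum>i\<in>I. \<Sum>j\<in>J. X i j) - (2 * k) * (\<Sum>i\<in>I. \<Sum>j\<in>J. Y i j)"
    by (simp add: sum_subtractf sum_distrib_left)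
  finally show ?thesis by (simp add: algebra_simps)
qed

lemma Lop_psi_bound:
  fixes a :: "real^'n \<Rightarrow> 'n \<Rightarrow> 'n \<Rightarrow> real" and b :: "real^'n \<Rightarrow> real^'n"
  assumes C: "C > 0" "\<And>\<nu>. (\<Sum>i\<in>UNIV. \<Sum>j\<in>UNIV. a z i j * \<nu>$i * \<nu>$j) \<le> C * (norm \<nu>)^2 * (1 + (norm z)^2)"
      "norm (b z) \<le> C * (1 + norm z)"
    and psd: "\<And>\<nu>. (\<Sum>i\<in>UNIV. \<Sum>j\<in>UNIV. a z i j * \<nu>$i * \<nu>$j) \<ge> 0"
    and eta: "\<eta> \<ge> 0"
  shows "Lop a b (psi \<eta>) z \<le> \<eta> * (2 * C * (real CARD('n) + 2))"
proof -
  define \<rho> where "\<rho> = 1 + z \<bullet> z"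
  have \<rho>: "\<rho> > 0" "\<rho> \<ge> 1" using rho_pos[of z] by (auto simp: \<rho>_def)
  define Q where "Q = (\<Sum>i\<in>UNIV. \<Sum>j\<in>UNIV. a z i j * z$i * z$j)"
  have Q: "Q \<ge> 0" using psd[of z] by (simp add: Q_def)
  have S1: "(\<Sum>i\<in>UNIV. \<Sum>j\<in>UNIV. a z i j * pd2 (psi \<eta>) i j z) = (2 * \<eta> / \<rho>^2) * ((\<Sum>i\<in>UNIV. a z i i) * \<rho> - 2 * Q)"
  proof -
    have "(\<Sum>i\<in>UNIV. \<Sum>j\<in>UNIV. a z i j * pd2 (psi \<eta>) i j z)
        = (\<Sum>i\<in>UNIV. \<Sum>j\<in>UNIV. (2 * \<eta> / \<rho>^2) * ((if i = j then a z i j else 0) * \<rho> - 2 * (a z i j * z$i * z$j)))"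
      by (intro sum.cong refl, case_tac "x = xa") (simp_all add: pd2_psi \<rho>_def[symmetric] field_simps)
    also have "\<dots> = (2 * \<eta> / \<rho>^2) * ((\<Sum>i\<in>UNIV. \<Sum>j\<in>UNIV. (if i = j then a z i j else 0)) * \<rho> - 2 * Q)"
      unfolding Q_def by (rule sum2_lin)
    also have "(\<Sum>i\<in>UNIV. \<Sum>j\<in>UNIV. (if i = j then a z i j else 0)) = (\<Sum>i\<in>UNIV. a z i i)"
      by simp
    finally show ?thesis .
  qed
  have diag: "(\<Sum>i\<in>UNIV. a z i i) \<le> real CARD('n) * (C * \<rho>)"
    using sum_bounded_above[of UNIV "\<lambda>i. a z i i" "C * \<rho>"] diag_bound[of a z C, OF C(2)] by (simp add: \<rho>_def)
  have S1b: "(\<Sum>i\<in>UNIV. \<Sum>j\<in>UNIV. a z i j * pd2 (psi \<eta>) i j z) \<le> \<eta> * (2 * C * real CARD('n))"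
  proof -
    have "(2 * \<eta> / \<rho>^2) * ((\<Sum>i\<in>UNIV. a z i i) * \<rho> - 2 * Q) \<le> (2 * \<eta> / \<rho>^2) * ((real CARD('n) * (C * \<rho>)) * \<rho>)"
    proof (rule mult_left_mono)
      have "(\<Sum>i\<in>UNIV. a z i i) * \<rho> \<le> (real CARD('n) * (C * \<rho>)) * \<rho>"
        using diag \<rho> by (intro mult_right_mono) auto
      then show "(\<Sum>i\<in>UNIV. a z i i) * \<rho> - 2 * Q \<le> (real CARD('n) * (C * \<rho>)) * \<rho>" using Q by linarith
      show "0 \<le> 2 * \<eta> / \<rho>^2" using eta \<rho> by simp
    qed
    also have "\<dots> = \<eta> * (2 * C * real CARD('n))" using \<rho> by (simp add: field_simps power2_eq_square)
    finally show ?thesis using S1 by simp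
  qed
  have S2: "(\<Sum>i\<in>UNIV. b z $ i * pd1 (psi \<eta>) i z) = (2 * \<eta> / \<rho>) * (b z \<bullet> z)"
  proof -
    have "(\<Sum>i\<in>UNIV. b z $ i * pd1 (psi \<eta>) i z) = (\<Sum>i\<in>UNIV. (2 * \<eta> / \<rho>) * (b z $ i * z $ i))"
      by (intro sum.cong refl) (simp add: pd1_psi \<rho>_def)
    also have "\<dots> = (2 * \<eta> / \<rho>) * (\<Sum>i\<in>UNIV. b z $ i * z $ i)" by (simp add: sum_distrib_left)
    also have "(\<Sum>i\<in>UNIV. b z $ i * z $ i) = b z \<bullet> z" by (simp add: inner_vec_def)
    finally show ?thesis .
  qed
  have bz: "b z \<bullet> z \<le> 2 * C * \<rho>"
  proof -
    have "b z \<bullet> z \<le> norm (b z) * norm z" by (rule Cauchy_Schwarz_ineq2[THEN order_trans[OF abs_ge_self]])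
    also have "\<dots> \<le> C * (1 + norm z) * norm z" using C(3) by (simp add: mult_right_mono)
    also have "\<dots> \<le> 2 * C * \<rho>"
    proof -
      have "(1 + norm z) * norm z \<le> 2 * (1 + (norm z)^2)"
        by (rule aux_quad)
      then show ?thesis using C(1) by (simp add: \<rho>_def power2_norm_eq_inner mult.assoc mult_left_mono)
    qed
    finally show ?thesis .
  qed
  have S2b: "(\<Sum>i\<in>UNIV. b z $ i * pd1 (psi \<eta>) i z) \<le> \<eta> * (4 * C)"
  proof -
    have "(2 * \<eta> / \<rho>) * (b z \<bullet> z) \<le> (2 * \<eta> / \<rho>) * (2 * C * \<rho>)"
      using bz eta \<rho> by (intro mult_left_mono) auto
    also have "\<dots> = \<eta> * (4 * C)" using \<rho> by simp
    finally show ?thesis using S2 by simp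
  qed
  show ?thesis using S1b S2b unfolding Lop_def by (simp add: algebra_simps)
qed

lemma grad_psi_bound:
  fixes a :: "real^'n \<Rightarrow> 'n \<Rightarrow> 'n \<Rightarrow> real"
  assumes C: "C > 0" "\<And>\<nu>. (\<Sum>i\<in>UNIV. \<Sum>j\<in>UNIV. a z i j * \<nu>$i * \<nu>$j) \<le> C * (norm \<nu>)^2 * (1 + (norm z)^2)"
    and psd: "\<And>\<nu>. (\<Sum>i\<in>UNIV. \<Sum>j\<in>UNIV. a z i j * \<nu>$i * \<nu>$j) \<ge> 0"
  shows "(\<Sum>i\<in>UNIV. \<Sum>j\<in>UNIV. a z i j * pd1 (psi \<eta>) i z * pd1 (psi \<eta>) j z) \<le> 4 * C * \<eta>^2"
    "(\<Sum>i\<in>UNIV. \<Sum>j\<in>UNIV. a z i j * pd1 (psi \<eta>) i z * pd1 (psi \<eta>) j z) \<ge> 0"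
proof -
  define \<rho> where "\<rho> = 1 + z \<bullet> z"
  have \<rho>: "\<rho> > 0" "\<rho> \<ge> 1" using rho_pos[of z] by (auto simp: \<rho>_def)
  define c where "c = 2 * \<eta> / \<rho>"
  define v where "v = c *\<^sub>R z"
  have pv: "pd1 (psi \<eta>) i z = v $ i" for i by (simp add: pd1_psi v_def c_def \<rho>_def)
  have eq: "(\<Sum>i\<in>UNIV. \<Sum>j\<in>UNIV. a z i j * pd1 (psi \<eta>) i z * pd1 (psi \<eta>) j z) = (\<Sum>i\<in>UNIV. \<Sum>j\<in>UNIV. a z i j * v$i * v$j)"
    by (simp add: pv)
  show "(\<Sum>i\<in>UNIV. \<Sum>j\<in>UNIV. a z i j * pd1 (psi \<eta>) i z * pd1 (psi \<eta>) j z) \<ge> 0"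
    unfolding eq by (rule psd)
  have "(\<Sum>i\<in>UNIV. \<Sum>j\<in>UNIV. a z i j * v$i * v$j) \<le> C * (norm v)^2 * \<rho>"
    using C(2)[of v] by (simp add: \<rho>_def power2_norm_eq_inner)
  also have "(norm v)^2 = c^2 * (z \<bullet> z)" unfolding power2_norm_eq_inner v_def by (simp add: power2_eq_square)
  also have "C * (c^2 * (z \<bullet> z)) * \<rho> = 4 * C * \<eta>^2 * ((z \<bullet> z) / \<rho>)"
    using \<rho> by (simp add: c_def field_simps power2_eq_square)
  also have "\<dots> \<le> 4 * C * \<eta>^2"
  proof -
    have "(z \<bullet> z) / \<rho> \<le> 1" using \<rho> by (simp add: \<rho>_def)
    moreover have nn: "0 \<le> 4 * C * \<eta>^2" using C(1) by simp
    ultimately show ?thesis using mult_left_mono[of "(z \<bullet> z) / \<rho>" 1 "4 * C * \<eta>^2"] by (simp only: mult_1_right)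
  qed
  finally show "(\<Sum>i\<in>UNIV. \<Sum>j\<in>UNIV. a z i j * pd1 (psi \<eta>) i z * pd1 (psi \<eta>) j z) \<le> 4 * C * \<eta>^2"
    unfolding eq .
qed

lemma diff_cont: "(\<And>x. f differentiable (at x)) \<Longrightarrow> continuous_on UNIV f"
  by (rule differentiable_imp_continuous_on) (simp add: differentiable_on_def differentiable_at_withinI)

lemma core2:
  fixes a :: "real^'n \<Rightarrow> 'n \<Rightarrow> 'n \<Rightarrow> real" and b :: "real^'n \<Rightarrow> real^'n"
    and W :: "real^'n \<Rightarrow> real" and Q Q1 Q2 :: "real \<Rightarrow> real"
  assumes W: "C2 W"
    and C: "C > 0" "\<And>x \<nu>. (\<Sum>i\<in>UNIV. \<Sum>j\<in>UNIV. a x i j * \<nu>$i * \<nu>$j) \<le> C * (norm \<nu>)^2 * (1 + (norm x)^2)"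
      "\<And>x. norm (b x) \<le> C * (1 + norm x)"
    and psd: "\<And>x \<nu>. (\<Sum>i\<in>UNIV. \<Sum>j\<in>UNIV. a x i j * \<nu>$i * \<nu>$j) \<ge> 0"
    and Q1: "\<And>w. w > T \<Longrightarrow> (Q has_real_derivative Q1 w) (at w)"
    and Q2: "\<And>w. w > T \<Longrightarrow> (Q1 has_real_derivative Q2 w) (at w)"
    and Q1pos: "\<And>w. w > T \<Longrightarrow> Q1 w > 0"
    and Qle: "\<And>w. w \<le> T \<Longrightarrow> Q w \<le> Q T"
    and Qc: "continuous_on UNIV Q"
    and Bd: "\<And>x. Q (W x) \<le> B"
    and eta: "\<eta> > 0"
    and x0: "Q T + \<eta> * ln (1 + x0 \<bullet> x0) < Q (W x0)"
  shows "\<exists>z. W z > T \<and> Q1 (W z) * Lop a b W z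
           \<le> \<eta> * (2 * C * (real CARD('n) + 2)) + \<bar>Q2 (W z)\<bar> * (4 * C * \<eta>^2) / (Q1 (W z))^2"
proof -
  have dW: "\<And>y. W differentiable (at y)" using W unfolding C2_def by blast
  define Z where "Z x = Q (W x) - psi \<eta> x" for x
  have cW: "continuous_on UNIV W" by (rule diff_cont[OF dW])
  have cZ: "continuous_on UNIV Z"
  proof -
    have "continuous_on UNIV (\<lambda>x. Q (W x))"
      using continuous_on_compose[OF cW, of Q] Qc by (simp add: o_def continuous_on_subset)
    moreover have "continuous_on UNIV (psi \<eta>)" by (rule diff_cont[OF psi_differentiable])
    ultimately show ?thesis unfolding Z_def by (intro continuous_on_diff)
  qed
  define S where "S = {x. Z x0 \<le> Z x}"
  have clS: "closed S" unfolding S_def by (rule closed_Collect_le) (simp_all add: cZ)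
  define R where "R = (B - Z x0) / \<eta>"
  have bS: "bounded S"
  proof -
    have "norm x \<le> sqrt (exp R)" if "x \<in> S" for x
    proof -
      have "Z x0 \<le> Q (W x) - \<eta> * ln (1 + x \<bullet> x)" using that by (simp add: S_def Z_def psi_def)
      then have "\<eta> * ln (1 + x \<bullet> x) \<le> B - Z x0" using Bd[of x] by linarith
      then have "ln (1 + x \<bullet> x) \<le> R" using eta by (simp add: R_def field_simps)
      then have "exp (ln (1 + x \<bullet> x)) \<le> exp R" by simp
      then have "1 + x \<bullet> x \<le> exp R" using rho_pos[of x] by simp
      then have "(norm x)^2 \<le> exp R" by (simp add: power2_norm_eq_inner)
      then show ?thesis by (simp add: real_le_rsqrt)
    qed
    then show ?thesis unfolding bounded_iff by blast
  qed
  have x0S: "x0 \<in> S" by (simp add: S_def)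
  obtain z where zS: "z \<in> S" and zmax: "\<And>y. y \<in> S \<Longrightarrow> Z y \<le> Z z"
    using continuous_attains_sup[of S Z] clS bS x0S continuous_on_subset[OF cZ]
    by (metis compact_eq_bounded_closed empty_iff subset_UNIV)
  have mx: "Z x \<le> Z z" for x
  proof (cases "x \<in> S")
    case True then show ?thesis by (rule zmax)
  next
    case False
    then have "Z x < Z x0" by (simp add: S_def)
    also have "Z x0 \<le> Z z" using zmax[OF x0S] .
    finally show ?thesis by simp
  qed
  have psi_nn: "psi \<eta> x \<ge> 0" for x
    using eta by (simp add: psi_def)
  have WzT: "W z > T"
  proof (rule ccontr)
    assume "\<not> W z > T"
    then have "Q (W z) \<le> Q T" using Qle by simp
    then have "Z z \<le> Q T" using psi_nn[of z] by (simp add: Z_def)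
    moreover have "Z x0 > Q T" using x0 by (simp add: Z_def psi_def)
    ultimately show False using mx[of x0] by simp
  qed
  have cr: "(\<forall>j. Q1 (W z) * pd1 W j z = pd1 (psi \<eta>) j z) \<and>
    (\<Sum>i\<in>UNIV. \<Sum>j\<in>UNIV. a z i j * (Q2 (W z) * pd1 W i z * pd1 W j z + Q1 (W z) * pd2 W i j z - pd2 (psi \<eta>) i j z)) \<le> 0"
    by (rule core[OF W psi_differentiable pd1_psi_differentiable pd2_psi_sym Q1 Q2 WzT])
       (use mx psd in \<open>auto simp: Z_def\<close>)
  define q1 where "q1 = Q1 (W z)"
  define q2 where "q2 = Q2 (W z)"
  have q1: "q1 > 0" using Q1pos[OF WzT] by (simp add: q1_def)
  define dW where "dW i = pd1 W i z" for i
  define pP where "pP i = pd1 (psi \<eta>) i z" for i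
  define G where "G = (\<Sum>i\<in>UNIV. \<Sum>j\<in>UNIV. a z i j * dW i * dW j)"
  define G\<psi> where "G\<psi> = (\<Sum>i\<in>UNIV. \<Sum>j\<in>UNIV. a z i j * pP i * pP j)"
  define AH where "AH = (\<Sum>i\<in>UNIV. \<Sum>j\<in>UNIV. a z i j * pd2 W i j z)"
  define AP where "AP = (\<Sum>i\<in>UNIV. \<Sum>j\<in>UNIV. a z i j * pd2 (psi \<eta>) i j z)"
  have grad: "q1 * dW j = pP j" for j using cr by (simp add: q1_def dW_def pP_def)
  have tr: "q2 * G + q1 * AH - AP \<le> 0"
  proof -
    have "(\<Sum>i\<in>UNIV. \<Sum>j\<in>UNIV. a z i j * (q2 * dW i * dW j + q1 * pd2 W i j z - pd2 (psi \<eta>) i j z))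
        = (\<Sum>i\<in>UNIV. \<Sum>j\<in>UNIV. q2 * (a z i j * dW i * dW j) + q1 * (a z i j * pd2 W i j z) - a z i j * pd2 (psi \<eta>) i j z)"
      by (simp add: algebra_simps)
    also have "\<dots> = q2 * G + q1 * AH - AP"
      by (simp add: G_def AH_def AP_def sum.distrib sum_subtractf sum_distrib_left)
    finally show ?thesis using cr by (simp add: q1_def q2_def dW_def)
  qed
  have LW: "q1 * Lop a b W z = q1 * AH + (\<Sum>i\<in>UNIV. b z $ i * pP i)"
  proof -
    have "q1 * Lop a b W z = q1 * AH + (\<Sum>i\<in>UNIV. b z $ i * (q1 * dW i))"
      by (simp add: Lop_def AH_def dW_def algebra_simps sum_distrib_left)
    then show ?thesis by (simp add: grad)
  qed
  have LP: "Lop a b (psi \<eta>) z = AP + (\<Sum>i\<in>UNIV. b z $ i * pP i)"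
    by (simp add: Lop_def AP_def pP_def)
  have GG: "G = G\<psi> / q1^2"
  proof -
    have dWe: "dW i = pP i / q1" for i using grad[of i] q1 by (simp add: field_simps)
    have "G = (\<Sum>i\<in>UNIV. \<Sum>j\<in>UNIV. (a z i j * pP i * pP j) / q1^2)"
      unfolding G_def dWe by (simp add: power2_eq_square)
    then show ?thesis by (simp add: G\<psi>_def sum_divide_distrib)
  qed
  have Gpsi: "G\<psi> \<le> 4 * C * \<eta>^2" "G\<psi> \<ge> 0"
    using grad_psi_bound[of C a z \<eta>, OF C(1) C(2) psd] by (simp_all add: G\<psi>_def pP_def)
  have Gb: "- q2 * G \<le> \<bar>q2\<bar> * (4 * C * \<eta>^2) / q1^2"
  proof -
    have "- q2 * G \<le> \<bar>q2\<bar> * G" using Gpsi q1 GG by (simp add: abs_if)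
    also have "\<dots> = \<bar>q2\<bar> * G\<psi> / q1^2" by (simp add: GG)
    also have "\<dots> \<le> \<bar>q2\<bar> * (4 * C * \<eta>^2) / q1^2"
      using Gpsi q1 by (intro divide_right_mono mult_left_mono) auto
    finally show ?thesis .
  qed
  have Lpb: "Lop a b (psi \<eta>) z \<le> \<eta> * (2 * C * (real CARD('n) + 2))"
    by (rule Lop_psi_bound[OF C(1) C(2) C(3) psd]) (use eta in simp)
  have "q1 * Lop a b W z \<le> \<eta> * (2 * C * (real CARD('n) + 2)) + \<bar>q2\<bar> * (4 * C * \<eta>^2) / q1^2"
    using LW LP tr Gb Lpb by linarith
  then show ?thesis using WzT by (auto simp: q1_def q2_def)
qed

fun Dl :: "nat \<Rightarrow> real \<Rightarrow> real" where
  "Dl 0 w = 1"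
| "Dl (Suc k) w = Dl k w / (ln ^^ k) w"

fun D2l :: "nat \<Rightarrow> real \<Rightarrow> real" where
  "D2l 0 w = 0"
| "D2l (Suc k) w = (D2l k w * (ln ^^ k) w - Dl k w * Dl k w) / ((ln ^^ k) w * (ln ^^ k) w)"

lemma iter_props:
  fixes w :: real
  assumes w: "w > 0" and L1: "\<forall>i<k. (ln ^^ i) w \<ge> 1"
  shows "((ln ^^ k) has_real_derivative Dl k w) (at w) \<and> (Dl k has_real_derivative D2l k w) (at w)
    \<and> Dl k w > 0 \<and> (k \<ge> 1 \<longrightarrow> w * Dl k w \<le> 1) \<and> \<bar>D2l k w\<bar> \<le> real k * Dl k w / w
    \<and> Dl k w * (\<Prod>i<k. (ln ^^ i) w) = 1"
  using L1
proof (induction k)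
  case 0
  have "(Dl 0 has_real_derivative 0) (at w)"
    by (simp add: Dl.simps(1)[abs_def] del: Dl.simps)
  moreover have "Dl 0 = (\<lambda>_. 1)" by (simp add: fun_eq_iff)
  ultimately show ?case by (auto intro: DERIV_ident)
next
  case (Suc k)
  from Suc.prems have Lk: "(ln ^^ k) w \<ge> 1" by simp
  from Suc.prems have "\<forall>i<k. (ln ^^ i) w \<ge> 1" by simp
  from Suc.IH[OF this] have IH: "((ln ^^ k) has_real_derivative Dl k w) (at w)" "(Dl k has_real_derivative D2l k w) (at w)"
    "Dl k w > 0" "k \<ge> 1 \<longrightarrow> w * Dl k w \<le> 1" "\<bar>D2l k w\<bar> \<le> real k * Dl k w / w"
    "Dl k w * (\<Prod>i<k. (ln ^^ i) w) = 1" by auto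
  define L where "L = (ln ^^ k) w"
  have L: "L \<ge> 1" "L > 0" using Lk by (auto simp: L_def)
  have f1: "(ln ^^ Suc k) = (\<lambda>x. ln ((ln ^^ k) x))" by (simp add: fun_eq_iff)
  have d1: "((ln ^^ Suc k) has_real_derivative Dl (Suc k) w) (at w)"
  proof -
    have "((\<lambda>x. ln ((ln ^^ k) x)) has_real_derivative inverse L * Dl k w) (at w)"
      using DERIV_chain2[OF DERIV_ln[OF L(2)[unfolded L_def]] IH(1)] by (simp add: L_def)
    then show ?thesis unfolding f1 by (simp add: L_def field_simps)
  qed
  have f2: "Dl (Suc k) = (\<lambda>x. Dl k x / (ln ^^ k) x)" by (simp add: fun_eq_iff)
  have d2: "(Dl (Suc k) has_real_derivative D2l (Suc k) w) (at w)"
    unfolding f2 using DERIV_divide[OF IH(2) IH(1)] L by (simp add: L_def)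
  have pos: "Dl (Suc k) w > 0" using IH(3) L by (simp add: L_def)
  have wD: "w * Dl (Suc k) w \<le> 1"
  proof (cases "k = 0")
    case True then show ?thesis using w by simp
  next
    case False
    then have "w * Dl k w \<le> 1" using IH(4) by simp
    moreover have "w * Dl (Suc k) w = w * Dl k w / L" by (simp add: L_def)
    moreover have "w * Dl k w / L \<le> w * Dl k w / 1" using L w IH(3)
      by (intro divide_left_mono) auto
    ultimately show ?thesis by linarith
  qed
  have DS: "Dl (Suc k) w = Dl k w / L" by (simp add: L_def)
  have DSw: "Dl (Suc k) w \<le> 1 / w" using wD w by (simp add: field_simps)
  have d2b: "\<bar>D2l (Suc k) w\<bar> \<le> real (Suc k) * Dl (Suc k) w / w"
  proof -
    have eqD: "D2l (Suc k) w = D2l k w / L - Dl (Suc k) w * Dl (Suc k) w"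
      using L by (simp add: L_def field_simps)
    have s1: "\<bar>D2l (Suc k) w\<bar> \<le> \<bar>D2l k w\<bar> / L + Dl (Suc k) w * Dl (Suc k) w"
    proof -
      have "\<bar>D2l k w / L\<bar> = \<bar>D2l k w\<bar> / L" using L by (simp add: abs_divide)
      moreover have "\<bar>Dl (Suc k) w * Dl (Suc k) w\<bar> = Dl (Suc k) w * Dl (Suc k) w" by simp
      ultimately show ?thesis
        using abs_triangle_ineq4[of "D2l k w / L" "Dl (Suc k) w * Dl (Suc k) w"] eqD by linarith
    qed
    have s2: "\<bar>D2l k w\<bar> / L \<le> (real k * Dl k w / w) / L"
      by (rule divide_right_mono[OF IH(5)]) (use L in simp)
    have s3: "(real k * Dl k w / w) / L = real k * Dl (Suc k) w / w" using DS by (simp add: L_def)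
    have s4: "Dl (Suc k) w * Dl (Suc k) w \<le> Dl (Suc k) w * (1 / w)"
      using DSw pos by (intro mult_left_mono) auto
    have eq: "\<And>x. real k * x / w + x * (1 / w) = real (Suc k) * x / w" by (simp add: add_divide_distrib algebra_simps)
    show ?thesis using s1 s2 s3 s4 eq[of "Dl (Suc k) w"] by linarith
  qed
  have pr: "Dl (Suc k) w * (\<Prod>i<Suc k. (ln ^^ i) w) = 1"
    using IH(6) L by (simp add: L_def field_simps)
  show ?case using d1 d2 pos wD d2b pr by blast
qed

lemma iter_at_top: "filterlim (ln ^^ k :: real \<Rightarrow> real) at_top at_top"
proof (induction k)
  case 0 then show ?case by (simp add: filterlim_ident)
next
  case (Suc k)
  show ?case using filterlim_compose[OF ln_at_top Suc.IH] by (simp add: o_def)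
qed

lemma iter_eventually: "eventually (\<lambda>w. \<forall>i\<in>{..N}. (ln ^^ i) w \<ge> (1::real)) at_top"
proof (rule eventually_ball_finite)
  show "finite {..N}" by simp
  show "\<forall>i\<in>{..N}. eventually (\<lambda>w. (ln ^^ i) w \<ge> (1::real)) at_top"
  proof
    fix i
    show "eventually (\<lambda>w. (ln ^^ i) w \<ge> (1::real)) at_top"
      using iter_at_top[of i] unfolding filterlim_at_top by blast
  qed
qed

lemma ineq0:
  fixes \<kappa> P l d w e M G \<eta> C K :: real
  assumes k: "\<kappa> > 0" and P: "P \<ge> 1" and l: "l \<ge> 1" and d: "d > 0" and w: "w > 0" and wd: "w * d \<le> 1"
    and e: "\<bar>e\<bar> \<le> M * d / w" and M: "M \<ge> 0" and G: "G \<ge> P * P * l * l / (w * d * d)"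
    and eta: "\<eta> > 0" and C: "C > 0" and K: "K \<ge> 0" and e1: "\<eta> * K \<le> \<kappa> / 4"
    and e2: "4 * C * \<eta>^2 * (\<kappa> + 1 + M) / \<kappa> \<le> \<kappa> / 4"
  shows "\<kappa> * d / (P * l) * G > \<eta> * K + \<bar>\<kappa> * ((- \<kappa> - 1) * (d * d / (P * l * l)) + e / (P * l))\<bar> * (4 * C * \<eta>^2) / (\<kappa> * d / (P * l))^2"
proof -
  define X where "X = P * l / (w * d)"
  have Pl: "P * l \<ge> 1" using P l by (metis mult_mono' mult_1_right zero_le_one order_trans)
  have X1: "X \<ge> 1" using Pl wd w d by (simp add: X_def field_simps)
  have PX: "P \<le> X"
  proof -
    have "P * 1 \<le> P * (l / (w * d))" using P l wd w d by (intro mult_left_mono) (auto simp: field_simps)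
    then show ?thesis by (simp add: X_def)
  qed
  have q1G: "\<kappa> * d / (P * l) * G \<ge> \<kappa> * X"
  proof -
    have "\<kappa> * d / (P * l) * G \<ge> \<kappa> * d / (P * l) * (P * P * l * l / (w * d * d))"
      using G k d P l by (intro mult_left_mono) auto
    also have "\<kappa> * d / (P * l) * (P * P * l * l / (w * d * d)) = \<kappa> * X"
      using P l d w by (simp add: X_def field_simps)
    finally show ?thesis .
  qed
  define q2 where "q2 = \<kappa> * ((- \<kappa> - 1) * (d * d / (P * l * l)) + e / (P * l))"
  have q2b: "\<bar>q2\<bar> \<le> \<kappa> * ((\<kappa> + 1) * (d * d / (P * l * l)) + M * d / (w * P * l))"
  proof -
    have "\<bar>(- \<kappa> - 1) * (d * d / (P * l * l)) + e / (P * l)\<bar> \<le> (\<kappa> + 1) * (d * d / (P * l * l)) + \<bar>e\<bar> / (P * l)"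
    proof -
      have a1: "\<bar>(- \<kappa> - 1) * (d * d / (P * l * l))\<bar> = (\<kappa> + 1) * (d * d / (P * l * l))"
        using k d P l by (simp add: abs_mult)
      have a2: "\<bar>e / (P * l)\<bar> = \<bar>e\<bar> / (P * l)" using P l by (simp add: abs_divide abs_mult)
      show ?thesis using abs_triangle_ineq[of "(- \<kappa> - 1) * (d * d / (P * l * l))" "e / (P * l)"] a1 a2 by linarith
    qed
    also have "\<bar>e\<bar> / (P * l) \<le> (M * d / w) / (P * l)" using e P l by (intro divide_right_mono) auto
    also have "(M * d / w) / (P * l) = M * d / (w * P * l)" by simp
    finally show ?thesis unfolding q2_def using k by (simp add: abs_mult mult_left_mono)
  qed
  have ratio: "\<bar>q2\<bar> / (\<kappa> * d / (P * l))^2 \<le> (\<kappa> + 1 + M) * X / \<kappa>"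
  proof -
    have pos: "(\<kappa> * d / (P * l))^2 > 0" using k d P l by simp
    have "\<bar>q2\<bar> / (\<kappa> * d / (P * l))^2 \<le> \<kappa> * ((\<kappa> + 1) * (d * d / (P * l * l)) + M * d / (w * P * l)) / (\<kappa> * d / (P * l))^2"
      using q2b pos by (intro divide_right_mono) auto
    also have "\<dots> = ((\<kappa> + 1) * P + M * X) / \<kappa>"
      using k d P l w by (simp add: X_def field_simps power2_eq_square)
    also have "\<dots> \<le> ((\<kappa> + 1) * X + M * X) / \<kappa>"
      using PX k by (intro divide_right_mono add_right_mono mult_left_mono) auto
    finally show ?thesis by (simp add: algebra_simps)
  qed
  have "\<bar>q2\<bar> * (4 * C * \<eta>^2) / (\<kappa> * d / (P * l))^2 = (4 * C * \<eta>^2) * (\<bar>q2\<bar> / (\<kappa> * d / (P * l))^2)"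
    by simp
  also have "\<dots> \<le> (4 * C * \<eta>^2) * ((\<kappa> + 1 + M) * X / \<kappa>)"
    using ratio C by (intro mult_left_mono) auto
  also have "\<dots> = (4 * C * \<eta>^2 * (\<kappa> + 1 + M) / \<kappa>) * X" by simp
  also have "\<dots> \<le> (\<kappa> / 4) * X" using e2 X1 by (intro mult_right_mono) auto
  finally have r2: "\<bar>q2\<bar> * (4 * C * \<eta>^2) / (\<kappa> * d / (P * l))^2 \<le> (\<kappa> / 4) * X" .
  have "\<eta> * K + \<bar>q2\<bar> * (4 * C * \<eta>^2) / (\<kappa> * d / (P * l))^2 \<le> \<kappa> / 4 + (\<kappa> / 4) * X"
    using e1 r2 by linarith
  also have "\<dots> < \<kappa> * X" using X1 k by (simp add: field_simps) 
  also have "\<dots> \<le> \<kappa> * d / (P * l) * G" by (rule q1G)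
  finally show ?thesis unfolding q2_def .
qed

lemma loclip_cont:
  fixes g :: "real \<Rightarrow> real"
  assumes "loc_lipschitz S g"
  shows "continuous_on S g"
  unfolding continuous_on_iff
proof (intro ballI allI impI)
  fix x e :: real
  assume x: "x \<in> S" and e: "e > 0"
  obtain r L where r: "r > 0" and L: "L-lipschitz_on (cball x r \<inter> S) g"
    using assms x unfolding loc_lipschitz_def by blast
  have L0: "L \<ge> 0" using L lipschitz_on_nonneg by blast
  define d where "d = min r (e / (L + 1))"
  have d: "d > 0" using r e L0 by (simp add: d_def)
  show "\<exists>d>0. \<forall>x'\<in>S. dist x' x < d \<longrightarrow> dist (g x') (g x) < e"
  proof (intro exI conjI ballI impI)
    show "d > 0" by (rule d)
    fix y assume y: "y \<in> S" and dy: "dist y x < d"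
    have "y \<in> cball x r \<inter> S" using y dy by (auto simp: d_def dist_commute)
    moreover have "x \<in> cball x r \<inter> S" using x r by simp
    ultimately have "dist (g y) (g x) \<le> L * dist y x" using lipschitz_onD[OF L] by blast
    also have "\<dots> \<le> L * (e / (L + 1))" using dy L0 by (intro mult_left_mono) (auto simp: d_def)
    also have "\<dots> < e" using e L0 by (simp add: field_simps)
    finally show "dist (g y) (g x) < e" .
  qed
qed

lemma lop_ge:
  assumes eq: "Lop a b W z + f z (W z) = 0" and nn: "W z \<ge> 0"
    and Ff: "\<And>u. u \<ge> 0 \<Longrightarrow> bdd_above (range (\<lambda>x. f x u))"
  shows "Lop a b W z \<ge> - Fsup f (W z)"
proof -
  have "f z (W z) \<le> Fsup f (W z)" unfolding Fsup_def by (rule cSUP_upper[OF UNIV_I Ff[OF nn]])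
  then show ?thesis using eq by linarith
qed

lemma step2:
  fixes a :: "real^'n \<Rightarrow> 'n \<Rightarrow> 'n \<Rightarrow> real" and b :: "real^'n \<Rightarrow> real^'n"
    and W :: "real^'n \<Rightarrow> real" and f :: "real^'n \<Rightarrow> real \<Rightarrow> real"
  assumes W: "C2 W" and Wnn: "\<And>x. W x \<ge> 0" and eq: "\<And>x. Lop a b W x + f x (W x) = 0"
    and C: "C > 0" "\<And>x \<nu>. (\<Sum>i\<in>UNIV. \<Sum>j\<in>UNIV. a x i j * \<nu>$i * \<nu>$j) \<le> C * (norm \<nu>)^2 * (1 + (norm x)^2)"
      "\<And>x. norm (b x) \<le> C * (1 + norm x)"
    and psd: "\<And>x \<nu>. (\<Sum>i\<in>UNIV. \<Sum>j\<in>UNIV. a x i j * \<nu>$i * \<nu>$j) \<ge> 0"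
    and Ff: "\<And>u. u \<ge> 0 \<Longrightarrow> bdd_above (range (\<lambda>x. f x u))"
    and Fneg: "\<And>u. u > 0 \<Longrightarrow> Fsup f u < 0"
    and Fc: "continuous_on {0..} (Fsup f)"
    and Wb: "\<And>x. W x \<le> B"
  shows "W x0 = 0"
proof (rule ccontr)
  assume "W x0 \<noteq> 0"
  then have W0: "W x0 > 0" using Wnn[of x0] by simp
  define c where "c = W x0 / 2"
  have c: "c > 0" "c < W x0" "c \<le> B" using W0 Wb[of x0] by (auto simp: c_def)
  have "continuous_on {c..B} (Fsup f)" using continuous_on_subset[OF Fc] c by auto
  then obtain us where us: "us \<in> {c..B}" "\<And>u. u \<in> {c..B} \<Longrightarrow> Fsup f u \<le> Fsup f us"
    using continuous_attains_sup[of "{c..B}" "Fsup f"] c by auto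
  define \<delta> where "\<delta> = - Fsup f us"
  have \<delta>: "\<delta> > 0" using Fneg[of us] us c by (auto simp: \<delta>_def)
  define K where "K = 2 * C * (real CARD('n) + 2)"
  have K: "K \<ge> 0" using C by (simp add: K_def)
  define l0 where "l0 = ln (1 + x0 \<bullet> x0)"
  have l0: "l0 \<ge> 0" by (simp add: l0_def)
  define \<eta> where "\<eta> = min (\<delta> / (2 * (K + 1))) ((W x0 - c) / (2 * (l0 + 1)))"
  have \<eta>: "\<eta> > 0" using \<delta> K c l0 by (simp add: \<eta>_def)
  have x0c: "c + \<eta> * l0 < W x0"
  proof -
    have "\<eta> * l0 \<le> (W x0 - c) / (2 * (l0 + 1)) * l0" using l0 by (intro mult_right_mono) (auto simp: \<eta>_def)
    also have "\<dots> = (W x0 - c) * (l0 / (2 * (l0 + 1)))" by simp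
    also have "\<dots> < (W x0 - c) * 1"
    proof (rule mult_strict_left_mono)
      show "l0 / (2 * (l0 + 1)) < 1" using l0 by (simp add: field_simps)
      show "0 < W x0 - c" using c by simp
    qed
    finally show ?thesis by simp
  qed
  obtain z where z: "W z > c" "1 * Lop a b W z \<le> \<eta> * K + \<bar>0::real\<bar> * (4 * C * \<eta>^2) / 1^2"
    using core2[OF W C psd, of c "\<lambda>w. w" "\<lambda>_. 1" "\<lambda>_. 0" B \<eta> x0] \<eta> x0c Wb
    unfolding K_def l0_def by (auto intro: DERIV_ident DERIV_const continuous_on_id)
  have "Lop a b W z \<ge> - Fsup f (W z)" using lop_ge[where a=a and b=b and W=W and z=z and f=f] eq[of z] Wnn[of z] Ff by blast
  moreover have "Fsup f (W z) \<le> Fsup f us" using us(2)[of "W z"] z Wb[of z] by auto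
  ultimately have "Lop a b W z \<ge> \<delta>" by (simp add: \<delta>_def)
  moreover have "\<eta> * K < \<delta>"
  proof -
    have "\<eta> * K \<le> \<delta> / (2 * (K + 1)) * K" using K by (intro mult_right_mono) (auto simp: \<eta>_def)
    also have "\<dots> < \<delta>" using \<delta> K by (simp add: field_simps add_nonneg_pos)
    finally show ?thesis .
  qed
  ultimately show False using z by simp
qed

lemma pw:
  fixes l k :: real
  assumes l: "l > 0"
  shows "l powr (-k-1) = 1 / (l powr k * l)" "l powr (-k-2) = 1 / (l powr k * l * l)"
    "l powr (2 + 2*k) = l powr k * l powr k * l * l"
proof -
  have a: "l powr (k+1) = l powr k * l" using l by (simp add: powr_add)
  have b: "l powr (k+2) = l powr k * l * l"
  proof -
    have "l powr (k+2) = l powr ((k+1)+1)" by (simp add: add.assoc)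
    also have "\<dots> = l powr (k+1) * l" using l by (simp add: powr_add power2_eq_square)
    finally show ?thesis using a by simp
  qed
  have c: "l powr (2 + 2*k) = l powr (k+1) * l powr (k+1)"
  proof -
    have "2 + 2*k = (k+1) + (k+1)" by simp
    then show ?thesis by (simp only: powr_add)
  qed
  have "l powr (-k-1) = inverse (l powr (k+1))" unfolding powr_minus[symmetric] by simp
  then show "l powr (-k-1) = 1 / (l powr k * l)" using a by (simp add: inverse_eq_divide)
  have "l powr (-k-2) = inverse (l powr (k+2))" unfolding powr_minus[symmetric] by simp
  then show "l powr (-k-2) = 1 / (l powr k * l * l)" using b by (simp add: inverse_eq_divide)
  show "l powr (2 + 2*k) = l powr k * l powr k * l * l" using a c by simp
qed

lemma prod_split0: "(\<Prod>i<Suc m. g i) = g 0 * (\<Prod>i=1..m. g i)" for g :: "nat \<Rightarrow> real"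
proof -
  have "{..<Suc m} = insert 0 {1..m}" by auto
  then show ?thesis by simp
qed

lemma step1:
  fixes a :: "real^'n \<Rightarrow> 'n \<Rightarrow> 'n \<Rightarrow> real" and b :: "real^'n \<Rightarrow> real^'n"
    and W :: "real^'n \<Rightarrow> real" and f :: "real^'n \<Rightarrow> real \<Rightarrow> real"
  assumes W: "C2 W" and Wnn: "\<And>x. W x \<ge> 0" and eq: "\<And>x. Lop a b W x + f x (W x) = 0"
    and C: "C > 0" "\<And>x \<nu>. (\<Sum>i\<in>UNIV. \<Sum>j\<in>UNIV. a x i j * \<nu>$i * \<nu>$j) \<le> C * (norm \<nu>)^2 * (1 + (norm x)^2)"
      "\<And>x. norm (b x) \<le> C * (1 + norm x)"
    and psd: "\<And>x \<nu>. (\<Sum>i\<in>UNIV. \<Sum>j\<in>UNIV. a x i j * \<nu>$i * \<nu>$j) \<ge> 0"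
    and Ff: "\<And>u. u \<ge> 0 \<Longrightarrow> bdd_above (range (\<lambda>x. f x u))"
    and F2: "F2' f"
  shows "\<exists>T. \<forall>x. W x \<le> T"
proof -
  from F2 obtain m :: nat and \<epsilon> :: real where \<epsilon>: "\<epsilon> > 0" and
    lim: "filterlim (\<lambda>u. Fsup f u / (u * (\<Prod>i=1..m. (ln ^^ i) u)^2 * ((ln ^^ (m+1)) u) powr (2+\<epsilon>))) at_bot at_top"
    unfolding F2'_def by blast
  define den where "den u = u * (\<Prod>i=1..m. (ln ^^ i) u)^2 * ((ln ^^ (m+1)) u) powr (2+\<epsilon>)" for u :: real
  have ev1: "eventually (\<lambda>u. Fsup f u / den u \<le> -1) at_top"
    using lim unfolding filterlim_at_bot den_def by blast
  from eventually_conj[OF ev1 iter_eventually[of "m+1"]] obtain T where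
    T: "\<And>w. w \<ge> T \<Longrightarrow> Fsup f w / den w \<le> -1 \<and> (\<forall>i\<in>{..m+1}. (ln ^^ i) w \<ge> 1)"
    unfolding eventually_at_top_linorder by blast
  define L :: "real \<Rightarrow> real" where "L = ln ^^ (m+1)"
  define D where "D = Dl (m+1)"
  define D2 where "D2 = D2l (m+1)"
  have P: "(L has_real_derivative D w) (at w) \<and> (D has_real_derivative D2 w) (at w) \<and> D w > 0
      \<and> w * D w \<le> 1 \<and> \<bar>D2 w\<bar> \<le> real (m+1) * D w / w \<and> D w * (\<Prod>i<m+1. (ln ^^ i) w) = 1
      \<and> L w \<ge> 1 \<and> w \<ge> 1 \<and> Fsup f w / den w \<le> -1" if w: "w \<ge> T" for w
  proof -
    have Tw: "Fsup f w / den w \<le> -1" "\<forall>i\<in>{..m+1}. (ln ^^ i) w \<ge> 1" using T[OF w] by auto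
    have w1: "w \<ge> 1" using Tw(2) by (drule_tac x=0 in bspec) auto
    have "\<forall>i<m+1. (ln ^^ i) w \<ge> 1" using Tw(2) by auto
    from iter_props[OF _ this] w1 have ip: "((ln ^^ (m+1)) has_real_derivative Dl (m+1) w) (at w) \<and> (Dl (m+1) has_real_derivative D2l (m+1) w) (at w)
      \<and> Dl (m+1) w > 0 \<and> (m+1 \<ge> 1 \<longrightarrow> w * Dl (m+1) w \<le> 1) \<and> \<bar>D2l (m+1) w\<bar> \<le> real (m+1) * Dl (m+1) w / w
      \<and> Dl (m+1) w * (\<Prod>i<m+1. (ln ^^ i) w) = 1" by simp
    have "L w \<ge> 1" unfolding L_def using bspec[OF Tw(2), of "m+1"] by simp
    then show ?thesis using ip w1 Tw(1) by (simp add: L_def D_def D2_def)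
  qed
  define \<kappa> where "\<kappa> = \<epsilon> / 2"
  have \<kappa>: "\<kappa> > 0" "2 * \<kappa> = \<epsilon>" using \<epsilon> by (auto simp: \<kappa>_def)
  define Q where "Q = (\<lambda>w. - (L (max w T) powr (-\<kappa>)))"
  define Q1 where "Q1 = (\<lambda>w. \<kappa> * L w powr (-\<kappa>-1) * D w)"
  define Q2 where "Q2 = (\<lambda>w. \<kappa> * ((-\<kappa>-1) * L w powr (-\<kappa>-2) * D w * D w + L w powr (-\<kappa>-1) * D2 w))"
  have Lpos: "L w > 0" if "w \<ge> T" for w using P[OF that] by simp
  have dQ: "(Q has_real_derivative Q1 w) (at w)" if w: "w > T" for w
  proof -
    have "((\<lambda>x. L x powr (-\<kappa>)) has_real_derivative (-\<kappa>) * L w powr (-\<kappa> - of_nat 1) * D w) (at w)"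
      by (rule DERIV_fun_powr) (use P[of w] Lpos[of w] w in auto)
    then have "((\<lambda>x. - (L x powr (-\<kappa>))) has_real_derivative - ((-\<kappa>) * L w powr (-\<kappa> - of_nat 1) * D w)) (at w)"
      by (rule DERIV_minus)
    then have "((\<lambda>x. - (L x powr (-\<kappa>))) has_real_derivative Q1 w) (at w)"
      by (rule DERIV_cong) (simp add: Q1_def)
    then show ?thesis
      by (rule has_field_derivative_transform_within_open[where S="{T<..}"]) (use w in \<open>auto simp: Q_def\<close>)
  qed
  have dQ1: "(Q1 has_real_derivative Q2 w) (at w)" if w: "w > T" for w
  proof -
    have A: "((\<lambda>x. L x powr (-\<kappa>-1)) has_real_derivative (-\<kappa>-1) * L w powr (-\<kappa>-1 - of_nat 1) * D w) (at w)"
      by (rule DERIV_fun_powr) (use P[of w] Lpos[of w] w in auto)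
    have B: "((\<lambda>x. \<kappa> * L x powr (-\<kappa>-1)) has_real_derivative \<kappa> * ((-\<kappa>-1) * L w powr (-\<kappa>-1 - of_nat 1) * D w)) (at w)"
      by (rule DERIV_cmult[OF A])
    have "((\<lambda>x. \<kappa> * L x powr (-\<kappa>-1) * D x) has_real_derivative
        \<kappa> * ((-\<kappa>-1) * L w powr (-\<kappa>-1 - of_nat 1) * D w) * D w + D2 w * (\<kappa> * L w powr (-\<kappa>-1))) (at w)"
      by (rule DERIV_mult[OF B]) (use P[of w] w in auto)
    moreover have "-\<kappa>-1 - of_nat 1 = -\<kappa>-2" by simp
    ultimately show ?thesis unfolding Q1_def Q2_def
      by (simp add: algebra_simps)
  qed
  have Q1pos: "Q1 w > 0" if "w > T" for w
    using P[of w] Lpos[of w] that \<kappa> by (simp add: Q1_def)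
  have Qle: "Q w \<le> Q T" if "w \<le> T" for w
    using that by (simp add: Q_def max_def)
  have Qc: "continuous_on UNIV Q"
  proof -
    have cL: "continuous_on {T..} L"
      by (rule continuous_at_imp_continuous_on) (use P in \<open>auto intro: DERIV_isCont\<close>)
    have cM: "continuous_on UNIV (\<lambda>w. L (max w T))"
      by (rule continuous_on_compose2[OF cL]) (auto intro!: continuous_intros)
    have "continuous_on UNIV (\<lambda>w. L (max w T) powr (-\<kappa>))"
    proof (rule continuous_on_powr[OF cM continuous_on_const], rule ballI)
      fix x :: real
      show "L (max x T) \<noteq> 0" using Lpos[of "max x T"] by simp
    qed
    then show ?thesis unfolding Q_def by (rule continuous_on_minus)
  qed
  have Bd: "Q (W x) \<le> 0" for x by (simp add: Q_def)
  show ?thesis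
  proof (rule exI[of _ T], rule allI, rule ccontr)
    fix x0
    assume "\<not> W x0 \<le> T"
    then have x0T: "W x0 > T" by simp
    have LT: "L T < L (W x0)"
      by (rule DERIV_pos_imp_increasing[OF x0T]) (use P in auto)
    have QT: "Q T < Q (W x0)"
    proof -
      have "L (W x0) powr (-\<kappa>) < L T powr (-\<kappa>)"
        by (rule powr_less_mono2_neg) (use \<kappa> Lpos[of T] LT in auto)
      then show ?thesis using x0T by (simp add: Q_def max_def)
    qed
    define K where "K = 2 * C * (real CARD('n) + 2)"
    have K: "K \<ge> 0" using C by (simp add: K_def)
    define M where "M = real (m+1)"
    have M: "M \<ge> 0" by (simp add: M_def)
    define l0 where "l0 = ln (1 + x0 \<bullet> x0)"
    have l0: "l0 \<ge> 0" by (simp add: l0_def)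
    define \<eta> where "\<eta> = min (min (\<kappa> / (4 * (K + 1))) (\<kappa> * \<kappa> / (16 * C * (\<kappa> + 1 + M))))
                          (min ((Q (W x0) - Q T) / (2 * (l0 + 1))) 1)"
    have \<eta>: "\<eta> > 0" using \<kappa> K C M QT l0 by (simp add: \<eta>_def)
    have \<eta>1: "\<eta> \<le> 1" by (simp add: \<eta>_def)
    have e1: "\<eta> * K \<le> \<kappa> / 4"
    proof -
      have "\<eta> * K \<le> \<kappa> / (4 * (K + 1)) * K" using K by (intro mult_right_mono) (auto simp: \<eta>_def)
      also have "\<dots> \<le> \<kappa> / 4" using K \<kappa> by (simp add: field_simps)
      finally show ?thesis .
    qed
    have e2: "4 * C * \<eta>^2 * (\<kappa> + 1 + M) / \<kappa> \<le> \<kappa> / 4"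
    proof -
      have "\<eta>^2 \<le> \<eta>" using \<eta> \<eta>1 by (simp add: power2_eq_square mult_left_le)
      also have "\<eta> \<le> \<kappa> * \<kappa> / (16 * C * (\<kappa> + 1 + M))" by (simp add: \<eta>_def)
      finally have "\<eta>^2 \<le> \<kappa> * \<kappa> / (16 * C * (\<kappa> + 1 + M))" .
      then have "4 * C * \<eta>^2 * (\<kappa> + 1 + M) / \<kappa> \<le> 4 * C * (\<kappa> * \<kappa> / (16 * C * (\<kappa> + 1 + M))) * (\<kappa> + 1 + M) / \<kappa>"
        using C \<kappa> M by (intro divide_right_mono mult_right_mono mult_left_mono) auto
      also have "\<dots> = \<kappa> / 4"
      proof -
        have gen: "\<And>S. S > 0 \<Longrightarrow> 4 * C * (\<kappa> * \<kappa> / (16 * C * S)) * S / \<kappa> = \<kappa> / 4"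
          using C \<kappa> by (simp add: field_simps)
        show ?thesis by (rule gen) (use \<kappa> M in simp)
      qed
      finally show ?thesis .
    qed
    have x0c: "Q T + \<eta> * l0 < Q (W x0)"
    proof -
      have "\<eta> * l0 \<le> (Q (W x0) - Q T) / (2 * (l0 + 1)) * l0" using l0 by (intro mult_right_mono) (auto simp: \<eta>_def)
      also have "\<dots> = (Q (W x0) - Q T) * (l0 / (2 * (l0 + 1)))" by simp
      also have "\<dots> < (Q (W x0) - Q T) * 1"
      proof (rule mult_strict_left_mono)
        show "l0 / (2 * (l0 + 1)) < 1" using l0 by (simp add: field_simps)
        show "0 < Q (W x0) - Q T" using QT by simp
      qed
      finally show ?thesis by simp
    qed
    obtain z where z: "W z > T" and zi: "Q1 (W z) * Lop a b W z \<le> \<eta> * K + \<bar>Q2 (W z)\<bar> * (4 * C * \<eta>^2) / (Q1 (W z))^2"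
      using core2[OF W C psd dQ dQ1 Q1pos Qle Qc Bd \<eta>, of x0] x0c unfolding K_def l0_def by blast
    define w where "w = W z"
    have wT: "w \<ge> T" using z by (simp add: w_def)
    note Pw = P[OF wT]
    define l where "l = L w"
    define Pk where "Pk = l powr \<kappa>"
    define d where "d = D w"
    define e where "e = D2 w"
    have l: "l \<ge> 1" "l > 0" using Pw by (auto simp: l_def)
    have Pk: "Pk \<ge> 1" using l \<kappa> by (simp add: Pk_def ge_one_powr_ge_zero)
    have d: "d > 0" using Pw by (simp add: d_def)
    have w: "w > 0" "w \<ge> 1" using Pw by auto
    have wd: "w * d \<le> 1" using Pw by (simp add: d_def)
    have ee: "\<bar>e\<bar> \<le> M * d / w" using Pw by (simp add: e_def d_def M_def)
    note pwl = pw[OF l(2), of \<kappa>]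
    have Q1w: "Q1 w = \<kappa> * d / (Pk * l)" using pwl by (simp add: Q1_def l_def d_def Pk_def)
    have Q2w: "Q2 w = \<kappa> * ((- \<kappa> - 1) * (d * d / (Pk * l * l)) + e / (Pk * l))"
      using pwl by (simp add: Q2_def l_def d_def e_def Pk_def)
    have prodL: "(\<Prod>i=1..m. (ln ^^ i) w) = 1 / (w * d)"
    proof -
      have "d * (w * (\<Prod>i=1..m. (ln ^^ i) w)) = 1"
        using Pw prod_split0[where m=m and g="\<lambda>i. (ln ^^ i) w"] by (simp add: d_def)
      then show ?thesis using w d by (simp add: field_simps)
    qed
    have den: "den w = Pk * Pk * l * l / (w * d * d)"
    proof -
      have "den w = w * (1 / (w * d))^2 * l powr (2 + 2 * \<kappa>)"
        unfolding den_def prodL using \<kappa>(2) by (simp add: L_def l_def)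
      also have "\<dots> = Pk * Pk * l * l / (w * d * d)"
        using pwl w d by (simp add: Pk_def power2_eq_square field_simps)
      finally show ?thesis .
    qed
    have denpos: "den w > 0" using den Pk l w d by simp
    have Fw: "Fsup f w \<le> - den w" using Pw denpos by (simp add: divide_le_eq)
    have G: "Lop a b W z \<ge> Pk * Pk * l * l / (w * d * d)"
    proof -
      have "Lop a b W z \<ge> - Fsup f (W z)"
        using lop_ge[where a=a and b=b and W=W and z=z and f=f] eq[of z] Wnn[of z] Ff by blast
      then show ?thesis using Fw den by (simp add: w_def)
    qed
    have "\<kappa> * d / (Pk * l) * Lop a b W z > \<eta> * K + \<bar>\<kappa> * ((- \<kappa> - 1) * (d * d / (Pk * l * l)) + e / (Pk * l))\<bar> * (4 * C * \<eta>^2) / (\<kappa> * d / (Pk * l))^2"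
      by (rule ineq0[OF \<kappa>(1) Pk l(1) d w(1) wd ee M G \<eta> C(1) K e1 e2])
    then show False using zi Q1w Q2w by (simp add: w_def)
  qed
qed

lemma main_common:
  fixes a :: "real^'n \<Rightarrow> 'n \<Rightarrow> 'n \<Rightarrow> real" and b :: "real^'n \<Rightarrow> real^'n"
    and f :: "real^'n \<Rightarrow> real \<Rightarrow> real" and W :: "real^'n \<Rightarrow> real"
  assumes elliptic: "\<And>x \<nu>. \<nu> \<noteq> 0 \<Longrightarrow> (\<Sum>i\<in>UNIV. \<Sum>j\<in>UNIV. a x i j * \<nu>$i * \<nu>$j) > 0"
    and F_fin: "\<And>u. u \<ge> 0 \<Longrightarrow> bdd_above (range (\<lambda>x. f x u))"
    and F2: "F2' f" and F3: "F3 f" and L1: "L1 a b"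
    and Fneg: "\<And>u. u > 0 \<Longrightarrow> Fsup f u < 0"
    and sol: "stat_sol a b f W"
  shows "\<forall>x. W x = 0"
proof -
  obtain C where C: "C > 0" "\<And>x \<nu>. (\<Sum>i\<in>UNIV. \<Sum>j\<in>UNIV. a x i j * \<nu>$i * \<nu>$j) \<le> C * (norm \<nu>)^2 * (1 + (norm x)^2)"
      "\<And>x. norm (b x) \<le> C * (1 + norm x)"
    using L1 unfolding L1_def by blast
  have psd: "(\<Sum>i\<in>UNIV. \<Sum>j\<in>UNIV. a x i j * \<nu>$i * \<nu>$j) \<ge> 0" for x \<nu>
  proof (cases "\<nu> = 0")
    case True then show ?thesis by simp
  next
    case False then show ?thesis using elliptic[of \<nu> x] by simp
  qed
  have W: "C2 W" and Wnn: "\<And>x. W x \<ge> 0" and eq: "\<And>x. Lop a b W x + f x (W x) = 0"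
    using sol unfolding stat_sol_def by blast+
  obtain T where T: "\<And>x. W x \<le> T"
    using step1[OF W Wnn eq C psd F_fin F2] by blast
  have Fc: "continuous_on {0..} (Fsup f)"
    using F3 unfolding F3_def by (blast intro: loclip_cont)
  show ?thesis
    using step2[OF W Wnn eq C psd F_fin Fneg Fc T] by blast
qed

lemma F_le_G:
  fixes f :: "real^'n \<Rightarrow> real \<Rightarrow> real"
  assumes f0: "\<And>x. f x 0 = 0" and u: "u \<ge> 0"
    and bdd: "bdd_above ((\<lambda>p. f (fst p) (snd p) - f (fst p) (snd p - u)) ` {(x,v). v \<ge> u})"
  shows "Fsup f u \<le> Gsup f u"
  unfolding Fsup_def
proof (rule cSUP_least)
  show "UNIV \<noteq> {}" by simp
  fix x
  have "f x u = (\<lambda>p. f (fst p) (snd p) - f (fst p) (snd p - u)) (x, u)" using f0 by simp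
  also have "\<dots> \<le> Gsup f u" unfolding Gsup_def
    by (rule cSUP_upper[OF _ bdd]) simp
  finally show "f x u \<le> Gsup f u" .
qed

theorem theorem5:
  fixes a :: "real^'n \<Rightarrow> 'n \<Rightarrow> 'n \<Rightarrow> real"
    and b :: "real^'n \<Rightarrow> real^'n"
    and f :: "real^'n \<Rightarrow> real \<Rightarrow> real"
    and \<alpha> :: real
  assumes alpha: "0 < \<alpha>" "\<alpha> < 1"
    and holder_a: "\<And>i j. holder \<alpha> (\<lambda>x. a x i j)"
    and holder_b: "\<And>i. holder \<alpha> (\<lambda>x. b x $ i)"
    and elliptic: "\<And>x \<nu>. \<nu> \<noteq> 0 \<Longrightarrow> (\<Sum>i\<in>UNIV. \<Sum>j\<in>UNIV. a x i j * \<nu>$i * \<nu>$j) > 0"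
    and f_lip: "loc_lipschitz (UNIV \<times> {0..}) (\<lambda>(x, u). f x u)"
    and F_fin: "\<And>u. u \<ge> 0 \<Longrightarrow> bdd_above (range (\<lambda>x. f x u))"
  shows "(F1' f \<and> F2' f \<and> F3 f \<and> F4a f \<and> L1 a b
           \<and> (\<forall>u\<ge>0. bdd_above ((\<lambda>p. f (fst p) (snd p) - f (fst p) (snd p - u)) ` {(x,v). v \<ge> u}))
           \<and> (\<forall>u>0. Gsup f u < 0)
           \<longrightarrow> (\<forall>W. stat_sol a b f W \<longrightarrow> (\<forall>x. W x = 0)))
       \<and> ((\<forall>x. concave_on {0..} (f x)) \<and> (\<forall>u>0. Fsup f u < 0) \<and> F2' f \<and> F3 f \<and> L1 a b
           \<longrightarrow> (\<forall>W. stat_sol a b f W \<longrightarrow> (\<forall>x. W x = 0)))"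
proof -
  have P1: "\<forall>x. W x = 0" if "F2' f" "F3 f" "L1 a b"
    "\<forall>u\<ge>0. bdd_above ((\<lambda>p. f (fst p) (snd p) - f (fst p) (snd p - u)) ` {(x,v). v \<ge> u})"
    "\<forall>u>0. Gsup f u < 0" "stat_sol a b f W" for W
  proof -
    note hyps = that
    have f0: "\<And>x. f x 0 = 0" using hyps(2) unfolding F3_def by blast
    have Fneg: "Fsup f u < 0" if u: "u > 0" for u
    proof -
      have "Fsup f u \<le> Gsup f u"
        by (rule F_le_G[where f=f, OF f0]) (use u hyps(4) in auto)
      also have "\<dots> < 0" using u hyps(5) by blast
      finally show ?thesis .
    qed
    show ?thesis by (rule main_common[OF elliptic F_fin hyps(1) hyps(2) hyps(3) Fneg hyps(6)])
  qed
  have P2: "\<forall>x. W x = 0" if "\<forall>u>0. Fsup f u < 0" "F2' f" "F3 f" "L1 a b" "stat_sol a b f W" for W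
    using main_common[OF elliptic F_fin that(2) that(3) that(4) _ that(5)] that(1) by blast
  show ?thesis
    apply (intro conjI impI allI)
     apply (elim conjE)
     apply (rule P1[THEN spec]; assumption)
    apply (elim conjE)
    apply (rule P2[THEN spec]; assumption)
    done
qed

end
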